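(* Suppose the cost distributions $\mathcal{C}_1,\dots,\mathcal{C}_n$ are regular, and for each $i$ let $\overline{p}_i\in\arg\max_{p'}\lambda_i(p')$, $\overline{\mathbf{p}}=(\overline{p}_1,\dots,\overline{p}_n)$. Consider the mechanism VWM-PIA: given reports $(\mathbf{c}',\mathbf{p})$, the slot is allocated so as to maximize $\sum_{i\in N}\phi_i(c_i',\overline{p}_i)\pi_i(\mathbf{c}',\mathbf{p})$ (ties broken arbitrarily); losers pay $0$; the winner $i$ pays $v_i\big(\phi_i^{-1}(\max\{\phi^{(2)}(\mathbf{c}',\overline{\mathbf{p}}),0\},\overline{p}_i),p_i\big)$, where $\phi_i^{-1}(\cdot,\overline{p}_i)$ is the inverse of $c\mapsto\phi_i(c,\overline{p}_i)$ and $\phi^{(2)}(\mathbf{c}',\overline{\mathbf{p}})$ is the second highest of $\phi_j(c_j',\overline{p}_j)$, $j\in N$. Then VWM-PIA is incentive compatible and individually rational, and its expected revenue $\mathrm{E}_{\mathbf{c}\sim\mathcal{C}}[\sum_i x_i(\mathbf{c},\overline{\mathbf{p}})]$ at the equilibrium prices $\overline{\mathbf{p}}$ is maximal among all incentive compatible and individually rational mechanisms with a price-independent allocation policy whose payments satisfy $x_i(c_i,\mathbf{c}_{-i},\mathbf{p})=v_i(c_i,p_i)\pi_i(c_i,\mathbf{c}_{-i},\mathbf{p})-\lambda_i(p_i)\int_{c_i}^{\overline{c}_i}\pi_i(z,\mathbf{c}_{-i},\mathbf{p})\,dz$ (for which $\overline{\mathbf{p}}$ is likewise the dominant-strategy price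 profile).
   Context: There are advertisers $N=\{1,\dots,n\}$ competing for a single ad slot. Advertiser $i$ has a private product cost $c_i\in[\underline{c}_i,\overline{c}_i]$; costs are independent, $c_i$ with CDF $\mathcal{C}_i$ and density $\mathcal{C}_i'$; $\mathcal{C}$ is the joint distribution. Advertiser $i$ sets a display price $p_i$, has conversion-rate function $\lambda_i:\mathbb{R}\to(0,1]$ and value $v_i(c_i,p_i)=(p_i-c_i)\lambda_i(p_i)$. Virtual value: $\phi_i(c_i,p_i)=v_i(c_i,p_i)-\lambda_i(p_i)\mathcal{C}_i(c_i)/\mathcal{C}_i'(c_i)$; $\mathcal{C}_i$ is regular if $\phi_i(c_i,p_i)$ is non-increasing in $c_i$ for every $p_i$. An auction mechanism maps cost reports and display prices $(\mathbf{c}',\mathbf{p})$ to allocations $\pi_i(\mathbf{c}',\mathbf{p})\in\{0,1\}$ (at most one winner) and payments $x_i(\mathbf{c}',\mathbf{p})$; utility $u_i=v_i(c_i,p_i)\pi_i-x_i$. IC: truthful cost reporting maximizes $u_i$ for all $i$, true costs, prices and others' reports. IR: truthful cost reporting yields $u_i\ge0$. The allocation policy is price-independent if $\pi_i(\mathbf{c}',\mathbf{p}^1)=\pi_i(\mathbf{c}',\mathbf{p}^2)$ for all $i,\mathbf{c}',\mathbf{p}^1,\mathbf{p}^2$. *)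

theory Defs
  imports "HOL-Analysis.Analysis"
begin

text \<open>Advertisers are the elements of a finite type 'n (N = UNIV).  Cost / price
  profiles are vectors in real^'n.  Allocations are real-valued (in {0,1}).\<close>

definition upd :: "real^'n \<Rightarrow> 'n \<Rightarrow> real \<Rightarrow> real^'n" where
  "upd c i z = (\<chi> j. if j = i then z else c $ j)"

definition val :: "('n \<Rightarrow> real \<Rightarrow> real) \<Rightarrow> 'n \<Rightarrow> real \<Rightarrow> real \<Rightarrow> real" where
  "val lam i c p = (p - c) * lam i p"

definition virt :: "('n \<Rightarrow> real \<Rightarrow> real) \<Rightarrow> ('n \<Rightarrow> real \<Rightarrow> real) \<Rightarrow> ('n \<Rightarrow> real \<Rightarrow> real)
    \<Rightarrow> 'n \<Rightarrow> real \<Rightarrow> real \<Rightarrow> real" where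
  "virt lam C dens i c p = val lam i c p - lam i p * C i c / dens i c"

definition regular :: "('n \<Rightarrow> real \<Rightarrow> real) \<Rightarrow> ('n \<Rightarrow> real \<Rightarrow> real) \<Rightarrow> ('n \<Rightarrow> real \<Rightarrow> real)
    \<Rightarrow> real^'n \<Rightarrow> real^'n \<Rightarrow> 'n \<Rightarrow> bool" where
  "regular lam C dens lo hi i \<longleftrightarrow>
     (\<forall>p c1 c2. lo$i \<le> c1 \<longrightarrow> c1 \<le> c2 \<longrightarrow> c2 \<le> hi$i \<longrightarrow>
        virt lam C dens i c2 p \<le> virt lam C dens i c1 p)"

definition feasible_alloc :: "('n::finite \<Rightarrow> real^'n \<Rightarrow> real^'n \<Rightarrow> real) \<Rightarrow> real^'n \<Rightarrow> real^'n \<Rightarrow> bool" where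
  "feasible_alloc \<pi> lo hi \<longleftrightarrow>
     (\<forall>c\<in>cbox lo hi. \<forall>p. (\<forall>i. \<pi> i c p \<in> {0,1}) \<and> card {i. \<pi> i c p = 1} \<le> 1)"

text \<open>utility of i with true cost ci, under reports r and prices p\<close>
definition utility :: "('n \<Rightarrow> real \<Rightarrow> real) \<Rightarrow> ('n \<Rightarrow> real^'n \<Rightarrow> real^'n \<Rightarrow> real)
    \<Rightarrow> ('n \<Rightarrow> real^'n \<Rightarrow> real^'n \<Rightarrow> real) \<Rightarrow> 'n \<Rightarrow> real \<Rightarrow> real^'n \<Rightarrow> real^'n \<Rightarrow> real" where
  "utility lam \<pi> x i ci r p = val lam i ci (p$i) * \<pi> i r p - x i r p"

definition IC :: "('n \<Rightarrow> real \<Rightarrow> real) \<Rightarrow> real^'n \<Rightarrow> real^'n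
    \<Rightarrow> ('n \<Rightarrow> real^'n \<Rightarrow> real^'n \<Rightarrow> real) \<Rightarrow> ('n \<Rightarrow> real^'n \<Rightarrow> real^'n \<Rightarrow> real) \<Rightarrow> bool" where
  "IC lam lo hi \<pi> x \<longleftrightarrow>
     (\<forall>i ci r p. ci \<in> {lo$i..hi$i} \<longrightarrow> r \<in> cbox lo hi \<longrightarrow>
        utility lam \<pi> x i ci r p \<le> utility lam \<pi> x i ci (upd r i ci) p)"

definition IR :: "('n \<Rightarrow> real \<Rightarrow> real) \<Rightarrow> real^'n \<Rightarrow> real^'n
    \<Rightarrow> ('n \<Rightarrow> real^'n \<Rightarrow> real^'n \<Rightarrow> real) \<Rightarrow> ('n \<Rightarrow> real^'n \<Rightarrow> real^'n \<Rightarrow> real) \<Rightarrow> bool" where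
  "IR lam lo hi \<pi> x \<longleftrightarrow> (\<forall>i. \<forall>c\<in>cbox lo hi. \<forall>p. utility lam \<pi> x i (c$i) c p \<ge> 0)"

definition price_independent :: "('n \<Rightarrow> real^'n \<Rightarrow> real^'n \<Rightarrow> real) \<Rightarrow> bool" where
  "price_independent \<pi> \<longleftrightarrow> (\<forall>i c p1 p2. \<pi> i c p1 = \<pi> i c p2)"

definition payment_rule :: "('n \<Rightarrow> real \<Rightarrow> real) \<Rightarrow> real^'n \<Rightarrow> real^'n
    \<Rightarrow> ('n \<Rightarrow> real^'n \<Rightarrow> real^'n \<Rightarrow> real) \<Rightarrow> ('n \<Rightarrow> real^'n \<Rightarrow> real^'n \<Rightarrow> real) \<Rightarrow> bool" where
  "payment_rule lam lo hi \<pi> x \<longleftrightarrow>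
     (\<forall>i. \<forall>c\<in>cbox lo hi. \<forall>p. x i c p =
        val lam i (c$i) (p$i) * \<pi> i c p
        - lam i (p$i) * integral {c$i..hi$i} (\<lambda>z. \<pi> i (upd c i z) p))"

definition dominant_prices :: "('n \<Rightarrow> real \<Rightarrow> real) \<Rightarrow> real^'n \<Rightarrow> real^'n
    \<Rightarrow> ('n \<Rightarrow> real^'n \<Rightarrow> real^'n \<Rightarrow> real) \<Rightarrow> ('n \<Rightarrow> real^'n \<Rightarrow> real^'n \<Rightarrow> real) \<Rightarrow> real^'n \<Rightarrow> bool" where
  "dominant_prices lam lo hi \<pi> x pbar \<longleftrightarrow>
     (\<forall>i. \<forall>c\<in>cbox lo hi. \<forall>p q.
        utility lam \<pi> x i (c$i) c (upd p i q) \<le> utility lam \<pi> x i (c$i) c (upd p i (pbar$i)))"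

definition revenue :: "('n::finite \<Rightarrow> real \<Rightarrow> real) \<Rightarrow> real^'n \<Rightarrow> real^'n
    \<Rightarrow> ('n \<Rightarrow> real^'n \<Rightarrow> real^'n \<Rightarrow> real) \<Rightarrow> real^'n \<Rightarrow> real" where
  "revenue dens lo hi x pbar =
     integral (cbox lo hi) (\<lambda>c. (\<Sum>i\<in>UNIV. x i c pbar) * (\<Prod>i\<in>UNIV. dens i (c$i)))"

text \<open>max{phi^(2)(c,pbar), 0} for the winner i = max(0, max_{j\<noteq>i} phi_j(c_j,pbar_j))\<close>
definition threshold :: "('n::finite \<Rightarrow> real \<Rightarrow> real) \<Rightarrow> ('n \<Rightarrow> real \<Rightarrow> real) \<Rightarrow> ('n \<Rightarrow> real \<Rightarrow> real)
    \<Rightarrow> real^'n \<Rightarrow> 'n \<Rightarrow> real^'n \<Rightarrow> real" where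
  "threshold lam C dens pbar i c =
     Max (insert 0 {virt lam C dens j (c$j) (pbar$j) | j. j \<noteq> i})"

text \<open>inverse of c \<mapsto> phi_i(c,pbar_i) on [lo_i,hi_i] (generalised: largest cost
  whose virtual value is at least t; equals the inverse on the range)\<close>
definition phi_inv :: "('n \<Rightarrow> real \<Rightarrow> real) \<Rightarrow> ('n \<Rightarrow> real \<Rightarrow> real) \<Rightarrow> ('n \<Rightarrow> real \<Rightarrow> real)
    \<Rightarrow> real^'n \<Rightarrow> real^'n \<Rightarrow> real^'n \<Rightarrow> 'n \<Rightarrow> real \<Rightarrow> real" where
  "phi_inv lam C dens lo hi pbar i t =
     Sup {z \<in> {lo$i..hi$i}. t \<le> virt lam C dens i z (pbar$i)}"

definition is_vwm_alloc :: "('n::finite \<Rightarrow> real \<Rightarrow> real) \<Rightarrow> ('n \<Rightarrow> real \<Rightarrow> real) \<Rightarrow> ('n \<Rightarrow> real \<Rightarrow> real)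
    \<Rightarrow> real^'n \<Rightarrow> real^'n \<Rightarrow> real^'n \<Rightarrow> ('n \<Rightarrow> real^'n \<Rightarrow> real^'n \<Rightarrow> real) \<Rightarrow> bool" where
  "is_vwm_alloc lam C dens lo hi pbar \<pi> \<longleftrightarrow>
     feasible_alloc \<pi> lo hi \<and>
     (\<forall>c\<in>cbox lo hi. \<forall>p. \<forall>a::'n \<Rightarrow> real. (\<forall>i. a i \<in> {0,1}) \<and> card {i. a i = 1} \<le> 1 \<longrightarrow>
        (\<Sum>i\<in>UNIV. virt lam C dens i (c$i) (pbar$i) * a i)
          \<le> (\<Sum>i\<in>UNIV. virt lam C dens i (c$i) (pbar$i) * \<pi> i c p))"

definition vwm_pay :: "('n::finite \<Rightarrow> real \<Rightarrow> real) \<Rightarrow> ('n \<Rightarrow> real \<Rightarrow> real) \<Rightarrow> ('n \<Rightarrow> real \<Rightarrow> real)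
    \<Rightarrow> real^'n \<Rightarrow> real^'n \<Rightarrow> real^'n \<Rightarrow> ('n \<Rightarrow> real^'n \<Rightarrow> real^'n \<Rightarrow> real)
    \<Rightarrow> 'n \<Rightarrow> real^'n \<Rightarrow> real^'n \<Rightarrow> real" where
  "vwm_pay lam C dens lo hi pbar \<pi> i c p =
     (if \<pi> i c p = 1
      then val lam i (phi_inv lam C dens lo hi pbar i (threshold lam C dens pbar i c)) (p$i)
      else 0)"

end

theory Submission
  imports Defs
begin


lemma onehot_cases:
  fixes a :: "'n::finite \<Rightarrow> real"
  assumes "\<forall>i. a i \<in> {0,1}" "card {i. a i = 1} \<le> 1"
  shows "(\<forall>j. a j = 0) \<or> (\<exists>k. a k = 1 \<and> (\<forall>j. j \<noteq> k \<longrightarrow> a j = 0))"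
proof (cases "\<exists>k. a k = 1")
  case True
  then obtain k where k: "a k = 1" by auto
  have "\<forall>j. j \<noteq> k \<longrightarrow> a j = 0"
  proof (intro allI impI)
    fix j assume jk: "j \<noteq> k"
    show "a j = 0"
    proof (rule ccontr)
      assume "a j \<noteq> 0"
      then have "a j = 1" using assms(1) by auto
      then have "{j,k} \<subseteq> {i. a i = 1}" using k by auto
      then have "card {j,k} \<le> card {i. a i = 1}" by (intro card_mono) auto
      then show False using jk assms(2) by auto
    qed
  qed
  then show ?thesis using k by auto
next
  case False
  then show ?thesis using assms(1) by auto
qed

lemma onehot_sum:
  fixes a :: "'n::finite \<Rightarrow> real"
  assumes "a k = 1" "\<forall>j. j \<noteq> k \<longrightarrow> a j = 0"
  shows "(\<Sum>j\<in>UNIV. v j * a j) = v k"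
proof -
  have "(\<Sum>j\<in>UNIV. v j * a j) = v k * a k"
    by (rule sum.mono_neutral_right[where S="{k}", simplified]) (use assms in auto)
  then show ?thesis using assms by simp
qed

locale vwm_setting =
  fixes lo hi pbar :: "real^'n::finite"
    and C dens lam :: "'n \<Rightarrow> real \<Rightarrow> real"
    and \<pi> :: "'n \<Rightarrow> real^'n \<Rightarrow> real^'n \<Rightarrow> real"
  assumes lohi: "\<forall>i. lo$i < hi$i"
    and cdf_lo: "\<forall>i. C i (lo$i) = 0"
    and cdf_hi: "\<forall>i. C i (hi$i) = 1"
    and density: "\<forall>i. \<forall>c\<in>{lo$i..hi$i}.
                    (C i has_real_derivative dens i c) (at c within {lo$i..hi$i})"
    and dens_pos: "\<forall>i. \<forall>c\<in>{lo$i..hi$i}. 0 < dens i c"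
    and lam: "\<forall>i p. 0 < lam i p \<and> lam i p \<le> 1"
    and reg: "\<forall>i. regular lam C dens lo hi i"
    and pbar: "\<forall>i p'. lam i p' \<le> lam i (pbar$i)"
    and invertible: "\<forall>i. inj_on (\<lambda>c. virt lam C dens i c (pbar$i)) {lo$i..hi$i}"
    and alloc: "is_vwm_alloc lam C dens lo hi pbar \<pi>"
begin

abbreviation "B \<equiv> cbox lo hi"
definition "V i z = virt lam C dens i z (pbar$i)"
definition "thr i c = threshold lam C dens pbar i c"
definition "SS i t = {z \<in> {lo$i..hi$i}. t \<le> V i z}"
definition "zs i t = phi_inv lam C dens lo hi pbar i t"

lemma zs_def': "zs i t = Sup (SS i t)"
  unfolding zs_def phi_inv_def SS_def V_def by simp

lemma B_iff: "c \<in> B \<longleftrightarrow> (\<forall>j. c$j \<in> {lo$j..hi$j})"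
  by (auto simp: mem_box_cart)

lemma upd_nth[simp]: "upd c i z $ j = (if j = i then z else c $ j)"
  by (simp add: upd_def)

lemma upd_in_B: "c \<in> B \<Longrightarrow> z \<in> {lo$i..hi$i} \<Longrightarrow> upd c i z \<in> B"
  by (auto simp: B_iff)

lemma upd_upd[simp]: "upd (upd c i z) i y = upd c i y"
  by (simp add: upd_def vec_eq_iff)

lemma upd_same[simp]: "upd c i (c$i) = c"
  by (simp add: upd_def vec_eq_iff)

lemma V_mono: "x \<in> {lo$i..hi$i} \<Longrightarrow> y \<in> {lo$i..hi$i} \<Longrightarrow> x \<le> y \<Longrightarrow> V i y \<le> V i x"
  using reg unfolding regular_def V_def by auto

lemma V_strict: "x \<in> {lo$i..hi$i} \<Longrightarrow> y \<in> {lo$i..hi$i} \<Longrightarrow> x < y \<Longrightarrow> V i y < V i x"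
proof -
  assume a: "x \<in> {lo$i..hi$i}" "y \<in> {lo$i..hi$i}" "x < y"
  have "V i y \<le> V i x" using V_mono a by auto
  moreover have "V i y \<noteq> V i x"
    using invertible a unfolding inj_on_def V_def by (metis less_irrefl)
  ultimately show ?thesis by auto
qed

lemma thr_upd[simp]: "thr i (upd c i z) = thr i c"
  unfolding thr_def threshold_def
  by (rule arg_cong[of _ _ "\<lambda>S. Max (insert 0 S)"]) auto

lemma thr_fin: "finite {V j (c$j) |j. j \<noteq> i}"
  by simp

lemma thr_ge0: "0 \<le> thr i c"
  unfolding thr_def threshold_def by (rule Max_ge) auto

lemma thr_geV: "j \<noteq> i \<Longrightarrow> V j (c$j) \<le> thr i c"
  unfolding thr_def threshold_def V_def by (rule Max_ge) auto

lemma thr_in: "thr i c = 0 \<or> (\<exists>j. j \<noteq> i \<and> thr i c = V j (c$j))"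
proof -
  have "thr i c \<in> insert 0 {V j (c$j) |j. j \<noteq> i}"
    unfolding thr_def threshold_def V_def by (rule Max_in) auto
  then show ?thesis by auto
qed

lemma thr_le: "0 \<le> x \<Longrightarrow> (\<forall>j. j \<noteq> i \<longrightarrow> V j (c$j) \<le> x) \<Longrightarrow> thr i c \<le> x"
  unfolding thr_def threshold_def V_def by (subst Max_le_iff) auto

lemma feas: "c \<in> B \<Longrightarrow> (\<forall>i. \<pi> i c p \<in> {0,1}) \<and> card {i. \<pi> i c p = 1} \<le> 1"
  using alloc unfolding is_vwm_alloc_def feasible_alloc_def by auto

lemma opt: "c \<in> B \<Longrightarrow> (\<forall>i. a i \<in> {0,1}) \<Longrightarrow> card {i. a i = 1} \<le> 1 \<Longrightarrow>
   (\<Sum>i\<in>UNIV. V i (c$i) * a i) \<le> (\<Sum>i\<in>UNIV. V i (c$i) * \<pi> i c p)"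
  using alloc unfolding is_vwm_alloc_def V_def by auto

lemma W1: assumes c: "c \<in> B" and w: "\<pi> i c p = 1" shows "thr i c \<le> V i (c$i)"
proof -
  have oh: "\<forall>j. j \<noteq> i \<longrightarrow> \<pi> j c p = 0"
  proof -
    from onehot_cases[of "\<lambda>j. \<pi> j c p"] feas[OF c]
    consider "\<forall>j. \<pi> j c p = 0" | k where "\<pi> k c p = 1" "\<forall>j. j \<noteq> k \<longrightarrow> \<pi> j c p = 0" by auto
    then show ?thesis
    proof cases
      case 1 then show ?thesis using w by auto
    next
      case 2 then have "k = i" using w by (metis zero_neq_one)
      then show ?thesis using 2 by auto
    qed
  qed
  have s: "(\<Sum>j\<in>UNIV. V j (c$j) * \<pi> j c p) = V i (c$i)"
    by (rule onehot_sum) (use w oh in auto)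
  have "0 \<le> V i (c$i)"
    using opt[OF c, of "\<lambda>_. 0" p] s by simp
  moreover have "V j (c$j) \<le> V i (c$i)" if "j \<noteq> i" for j
  proof -
    have "card {k. (if k = j then 1 else 0::real) = 1} = 1" by simp
    then have "(\<Sum>k\<in>UNIV. V k (c$k) * (if k = j then 1 else 0)) \<le> V i (c$i)"
      using opt[OF c, of "\<lambda>k. if k = j then 1 else 0" p] s by simp
    moreover have "(\<Sum>k\<in>UNIV. V k (c$k) * (if k = j then 1 else (0::real))) = V j (c$j)"
      by (rule onehot_sum) auto
    ultimately show ?thesis by simp
  qed
  ultimately show ?thesis by (intro thr_le) auto
qed

lemma W2: assumes c: "c \<in> B" and gt: "thr i c < V i (c$i)" shows "\<pi> i c p = 1"
proof (rule ccontr)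
  assume nw: "\<pi> i c p \<noteq> 1"
  have "(\<Sum>k\<in>UNIV. V k (c$k) * (if k = i then 1 else (0::real))) = V i (c$i)"
    by (rule onehot_sum) auto
  moreover have "card {k. (if k = i then 1 else 0::real) = 1} = 1" by simp
  ultimately have le: "V i (c$i) \<le> (\<Sum>j\<in>UNIV. V j (c$j) * \<pi> j c p)"
    using opt[OF c, of "\<lambda>k. if k = i then 1 else 0" p] by simp
  from onehot_cases[of "\<lambda>j. \<pi> j c p"] feas[OF c]
  consider "\<forall>j. \<pi> j c p = 0" | k where "\<pi> k c p = 1" "\<forall>j. j \<noteq> k \<longrightarrow> \<pi> j c p = 0" by auto
  then show False
  proof cases
    case 1
    then show False using le gt thr_ge0[of i c] by simp
  next
    case 2
    then have "k \<noteq> i" using nw by auto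
    moreover have "(\<Sum>j\<in>UNIV. V j (c$j) * \<pi> j c p) = V k (c$k)"
      by (rule onehot_sum) (use 2 in auto)
    ultimately show False using le gt thr_geV[of k i c] by simp
  qed
qed

lemma W1': "c \<in> B \<Longrightarrow> V i (c$i) < thr i c \<Longrightarrow> \<pi> i c p = 0"
  using W1 feas by fastforce

lemma SS_bdd: "bdd_above (SS i t)"
  unfolding SS_def by (rule bdd_aboveI[of _ "hi$i"]) auto

lemma SS_le_zs: "z \<in> SS i t \<Longrightarrow> z \<le> zs i t"
  unfolding zs_def' by (rule cSup_upper[OF _ SS_bdd])

lemma zs_range: "SS i t \<noteq> {} \<Longrightarrow> zs i t \<in> {lo$i..hi$i}"
proof -
  assume ne: "SS i t \<noteq> {}"
  have "zs i t \<le> hi$i" unfolding zs_def' by (rule cSup_least[OF ne]) (auto simp: SS_def)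
  moreover obtain z where "z \<in> SS i t" using ne by auto
  then have "lo$i \<le> zs i t" using SS_le_zs[of z i t] by (auto simp: SS_def)
  ultimately show ?thesis by auto
qed

lemma below_zs: "SS i t \<noteq> {} \<Longrightarrow> x \<in> {lo$i..hi$i} \<Longrightarrow> x < zs i t \<Longrightarrow> t < V i x"
proof -
  assume ne: "SS i t \<noteq> {}" and x: "x \<in> {lo$i..hi$i}" and lt: "x < zs i t"
  obtain z where z: "z \<in> SS i t" "x < z" using less_cSupD[OF ne lt[unfolded zs_def']] by auto
  then have "V i z < V i x" using V_strict[OF x, of z] by (auto simp: SS_def)
  then show ?thesis using z by (auto simp: SS_def)
qed

lemma ge_thr_le_zs: "x \<in> {lo$i..hi$i} \<Longrightarrow> t \<le> V i x \<Longrightarrow> SS i t \<noteq> {} \<and> x \<le> zs i t"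
  using SS_le_zs[of x i t] by (auto simp: SS_def)

lemma eq_thr_zs: "x \<in> {lo$i..hi$i} \<Longrightarrow> t = V i x \<Longrightarrow> zs i t = x"
proof -
  assume x: "x \<in> {lo$i..hi$i}" and t: "t = V i x"
  have ne: "SS i t \<noteq> {}" and le: "x \<le> zs i t" using ge_thr_le_zs[OF x] t by auto
  show ?thesis
  proof (rule ccontr)
    assume "zs i t \<noteq> x"
    then have "x < zs i t" using le by auto
    then show False using below_zs[OF ne x] t by auto
  qed
qed

abbreviation "X \<equiv> vwm_pay lam C dens lo hi pbar \<pi>"

lemma util_vwm: assumes "c \<in> B" shows
  "utility lam \<pi> X i ci c p = (if \<pi> i c p = 1 then (zs i (thr i c) - ci) * lam i (p$i) else 0)"
proof -
  have "\<pi> i c p \<in> {0,1}" using feas[OF assms] by auto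
  then show ?thesis
  unfolding utility_def vwm_pay_def zs_def[symmetric] thr_def[symmetric] val_def
  by (auto simp: algebra_simps)
qed

lemma util_vwm_nonneg:
  assumes c: "c \<in> B" shows "0 \<le> utility lam \<pi> X i (c$i) c p"
proof (cases "\<pi> i c p = 1")
  case True
  have ci: "c$i \<in> {lo$i..hi$i}" using c B_iff by auto
  have "c$i \<le> zs i (thr i c)" using ge_thr_le_zs[OF ci W1[OF c True]] by auto
  moreover have "0 < lam i (p$i)" using lam by auto
  ultimately show ?thesis using True by (simp add: util_vwm[OF c])
next
  case False then show ?thesis by (simp add: util_vwm[OF c])
qed

lemma IC_vwm: "IC lam lo hi \<pi> X"
  unfolding IC_def
proof (intro allI impI)
  fix i ci r p assume ci: "ci \<in> {lo$i..hi$i}" and r: "r \<in> B"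
  let ?r = "upd r i ci"
  have r': "?r \<in> B" using upd_in_B[OF r ci] .
  have u': "0 \<le> utility lam \<pi> X i ci ?r p"
    using util_vwm_nonneg[OF r', of i p] by simp
  show "utility lam \<pi> X i ci r p \<le> utility lam \<pi> X i ci ?r p"
  proof (cases "\<pi> i r p = 1")
    case False then show ?thesis using u' by (simp add: util_vwm[OF r])
  next
    case True
    have ri: "r$i \<in> {lo$i..hi$i}" using r B_iff by auto
    have ne: "SS i (thr i r) \<noteq> {}" using ge_thr_le_zs[OF ri W1[OF r True]] by auto
    show ?thesis
    proof (cases "ci < zs i (thr i r)")
      case True2: True
      have "thr i ?r < V i (?r$i)" using below_zs[OF ne ci True2] by simp
      then have "\<pi> i ?r p = 1" using W2[OF r'] by blast
      then show ?thesis using True by (simp add: util_vwm[OF r] util_vwm[OF r'])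
    next
      case False
      then have "utility lam \<pi> X i ci r p \<le> 0"
        using True lam by (simp add: util_vwm[OF r] mult_nonpos_nonneg less_imp_le)
      then show ?thesis using u' by linarith
    qed
  qed
qed

lemma IR_vwm: "IR lam lo hi \<pi> X"
  unfolding IR_def using util_vwm_nonneg by auto

lemma dom_vwm: "dominant_prices lam lo hi \<pi> X pbar"
  unfolding dominant_prices_def
proof (intro allI ballI)
  fix i c p q assume c: "c \<in> B"
  have ci: "c$i \<in> {lo$i..hi$i}" using c B_iff by auto
  let ?t = "thr i c"
  consider "?t < V i (c$i)" | "V i (c$i) < ?t" | "V i (c$i) = ?t" by linarith
  then show "utility lam \<pi> X i (c$i) c (upd p i q) \<le> utility lam \<pi> X i (c$i) c (upd p i (pbar$i))"
  proof cases
    case 1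
    have "c$i \<le> zs i ?t" using ge_thr_le_zs[OF ci] 1 by auto
    moreover have "lam i q \<le> lam i (pbar$i)" using pbar by auto
    ultimately show ?thesis using W2[OF c 1] by (simp add: util_vwm[OF c] mult_left_mono)
  next
    case 2 then show ?thesis using W1'[OF c 2] by (simp add: util_vwm[OF c])
  next
    case 3 then have "zs i ?t = c$i" using eq_thr_zs[OF ci] by auto
    then show ?thesis by (simp add: util_vwm[OF c])
  qed
qed

lemma dom_other:
  assumes fe: "feasible_alloc \<pi>' lo hi" and pi: "price_independent \<pi>'"
    and pr: "payment_rule lam lo hi \<pi>' x'"
  shows "dominant_prices lam lo hi \<pi>' x' pbar"
  unfolding dominant_prices_def
proof (intro allI ballI)
  fix i c p q assume c: "c \<in> B"
  have u: "utility lam \<pi>' x' i (c$i) c p' = lam i (p'$i) * integral {c$i..hi$i} (\<lambda>z. \<pi>' i (upd c i z) p')" for p'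
    using pr c unfolding payment_rule_def utility_def by auto
  have pind: "\<pi>' i (upd c i z) p' = \<pi>' i (upd c i z) p" for z p'
    using pi unfolding price_independent_def by metis
  define I where "I = integral {c$i..hi$i} (\<lambda>z. \<pi>' i (upd c i z) p)"
  have I0: "0 \<le> I"
  proof (cases "(\<lambda>z. \<pi>' i (upd c i z) p) integrable_on {c$i..hi$i}")
    case True
    show ?thesis unfolding I_def
    proof (rule integral_nonneg[OF True])
      fix z assume z: "z \<in> {c$i..hi$i}"
      have "lo$i \<le> c$i" using c B_iff by auto
      then have "z \<in> {lo$i..hi$i}" using z by auto
      then have "upd c i z \<in> B" using c by (intro upd_in_B)
      then show "0 \<le> \<pi>' i (upd c i z) p" using fe unfolding feasible_alloc_def
        by (metis insert_iff order_refl singletonD zero_le_one)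
    qed
  next
    case False then show ?thesis unfolding I_def by (simp add: not_integrable_integral)
  qed
  have "utility lam \<pi>' x' i (c$i) c (upd p i q) = lam i q * I"
    unfolding u I_def using pind[of _ "upd p i q"] by simp
  moreover have "utility lam \<pi>' x' i (c$i) c (upd p i (pbar$i)) = lam i (pbar$i) * I"
    unfolding u I_def using pind[of _ "upd p i (pbar$i)"] by simp
  ultimately show "utility lam \<pi>' x' i (c$i) c (upd p i q) \<le> utility lam \<pi>' x' i (c$i) c (upd p i (pbar$i))"
    using pbar I0 by (simp add: mult_right_mono)
qed

end


lemma upd_nth'[simp]: "upd c i z $ j = (if j = i then z else c $ j)"
  by (simp add: upd_def)

lemma prod_Basis_cart:
  fixes y :: "real^'n::finite"
  shows "(\<Prod>b\<in>Basis. f (y \<bullet> b)) = (\<Prod>j\<in>UNIV. f (y $ j))"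
proof -
  have B: "(Basis :: (real^'n) set) = (\<lambda>j. axis j 1) ` UNIV"
    by (auto simp: Basis_vec_def)
  have inj: "inj (\<lambda>j::'n. axis j (1::real))"
    by (auto intro!: injI simp: axis_eq_axis)
  show ?thesis unfolding B by (subst prod.reindex[OF inj]) (simp add: inner_axis)
qed

lemma prod_Basis_cart_id:
  fixes y :: "real^'n::finite"
  shows "(\<Prod>b\<in>Basis. y \<bullet> b) = (\<Prod>j\<in>UNIV. y $ j)"
  using prod_Basis_cart[of "\<lambda>t. t" y] by simp

lemma prod_Basis_cart2:
  fixes y :: "real^'n::finite" and F :: "real^'n \<Rightarrow> real \<Rightarrow> 'b::comm_monoid_mult"
  shows "(\<Prod>b\<in>Basis. F b (y \<bullet> b)) = (\<Prod>j\<in>UNIV. F (axis j 1) (y $ j))"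
proof -
  have B: "(Basis :: (real^'n) set) = (\<lambda>j. axis j 1) ` UNIV"
    by (auto simp: Basis_vec_def)
  have inj: "inj (\<lambda>j::'n. axis j (1::real))"
    by (auto intro!: injI simp: axis_eq_axis)
  show ?thesis unfolding B by (subst prod.reindex[OF inj]) (simp add: inner_axis)
qed

definition Phi :: "'n::finite \<Rightarrow> (real^'n) \<times> real \<Rightarrow> (real^'n) \<times> real" where
  "Phi i = (\<lambda>(c, z). (upd c i z, c$i))"

lemma upd_alt: "upd c i z = c + (z - c$i) *\<^sub>R axis i 1"
  by (simp add: vec_eq_iff axis_def)

lemma upd_continuous: "continuous_on UNIV (\<lambda>(c::real^'n::finite, z::real). upd c i z)"
  unfolding upd_alt case_prod_unfold
  by (intro continuous_intros)

lemma Phi_continuous: "continuous_on UNIV (Phi i)"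
  unfolding Phi_def
  by (auto intro!: continuous_intros continuous_on_Pair upd_continuous[unfolded case_prod_unfold]
     simp: case_prod_unfold)

lemma Phi_measurable[measurable]: "Phi i \<in> borel_measurable borel"
  by (rule borel_measurable_continuous_onI[OF Phi_continuous])

lemma upd_measurable[measurable]: "(\<lambda>(c::real^'n::finite, z::real). upd c i z) \<in> borel_measurable borel"
  by (rule borel_measurable_continuous_onI[OF upd_continuous])

lemma box_Pair: "box (la, lb) (ua, ub) = box la ua \<times> box lb ub"
  by (auto simp: Basis_prod_def ball_Un box_def)

lemma prod_Basis_pair:
  fixes x :: "(real^'n::finite) \<times> real"
  shows "(\<Prod>b\<in>Basis. x \<bullet> b) = (\<Prod>j\<in>UNIV. fst x $ j) * snd x"
proof -
  have "(\<Prod>b\<in>Basis. x \<bullet> b) = (\<Prod>b\<in>Basis. fst x \<bullet> b) * (\<Prod>b\<in>Basis. snd x \<bullet> b)"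
    by (cases x) (simp add: Basis_prod_def prod.union_disjoint prod.reindex inj_on_def image_iff)
  also have "(\<Prod>b\<in>Basis. fst x \<bullet> b) = (\<Prod>j\<in>UNIV. fst x $ j)"
    by (rule prod_Basis_cart_id)
  finally show ?thesis by simp
qed

lemma prod_upd: "(\<Prod>j\<in>UNIV. upd (c::real^'n::finite) i z $ j) = z * (\<Prod>j\<in>UNIV-{i}. c $ j)"
proof -
  have "(\<Prod>j\<in>UNIV. upd c i z $ j) = upd c i z $ i * (\<Prod>j\<in>UNIV-{i}. upd c i z $ j)"
    by (rule prod.remove) auto
  also have "(\<Prod>j\<in>UNIV-{i}. upd c i z $ j) = (\<Prod>j\<in>UNIV-{i}. c $ j)"
    by (rule prod.cong) auto
  finally show ?thesis by simp
qed

lemma prod_split_i: "(\<Prod>j\<in>UNIV. (c::real^'n::finite) $ j) = c$i * (\<Prod>j\<in>UNIV-{i}. c $ j)"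
  by (rule prod.remove) auto

lemma Phi_lborel: "distr lborel borel (Phi i) = (lborel :: ((real^'n::finite) \<times> real) measure)"
proof (rule lborel_eqI[symmetric])
  fix l u :: "(real^'n) \<times> real"
  assume le: "\<And>b. b \<in> Basis \<Longrightarrow> l \<bullet> b \<le> u \<bullet> b"
  obtain l1 l2 u1 u2 where lu: "l = (l1,l2)" "u = (u1,u2)" by (cases l, cases u)
  have le1: "l1$j \<le> u1$j" for j
    using le[of "(axis j 1, 0)"] by (auto simp: lu Basis_prod_def Basis_vec_def inner_axis)
  have le2: "l2 \<le> u2"
    using le[of "(0, 1)"] by (auto simp: lu Basis_prod_def)
  have pre: "Phi i -` box l u \<inter> space lborel = box (upd l1 i l2) (upd u1 i u2) \<times> box (l1$i) (u1$i)"
    by (auto simp: lu Phi_def box_Pair mem_box_cart split: if_splits)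
  have "emeasure (distr lborel borel (Phi i)) (box l u) = emeasure lborel (Phi i -` box l u \<inter> space lborel)"
    by (rule emeasure_distr) auto
  also have "\<dots> = emeasure (lborel \<Otimes>\<^sub>M lborel) (box (upd l1 i l2) (upd u1 i u2) \<times> box (l1$i) (u1$i))"
    unfolding pre lborel_prod ..
  also have "\<dots> = emeasure lborel (box (upd l1 i l2) (upd u1 i u2)) * emeasure lborel (box (l1$i) (u1$i))"
    by (rule lborel.emeasure_pair_measure_Times) auto
  also have "emeasure lborel (box (upd l1 i l2) (upd u1 i u2)) = (\<Prod>j\<in>UNIV. upd (u1 - l1) i (u2 - l2) $ j)"
  proof -
    have "\<And>b. b \<in> Basis \<Longrightarrow> upd l1 i l2 \<bullet> b \<le> upd u1 i u2 \<bullet> b"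
      using le1 le2 by (auto simp: Basis_vec_def inner_axis)
    then have "emeasure lborel (box (upd l1 i l2) (upd u1 i u2)) = (\<Prod>b\<in>Basis. (upd u1 i u2 - upd l1 i l2) \<bullet> b)"
      by (rule emeasure_lborel_box)
    also have "\<dots> = (\<Prod>j\<in>UNIV. (upd u1 i u2 - upd l1 i l2) $ j)"
      by (simp only: prod_Basis_cart_id)
    also have "(upd u1 i u2 - upd l1 i l2) = upd (u1 - l1) i (u2 - l2)"
      by (simp add: vec_eq_iff)
    finally show ?thesis .
  qed
  also have "emeasure lborel (box (l1$i) (u1$i)) = u1$i - l1$i"
    using le1[of i] by simp
  finally have "emeasure (distr lborel borel (Phi i)) (box l u) =
      ennreal ((\<Prod>j\<in>UNIV. upd (u1 - l1) i (u2 - l2) $ j) * (u1$i - l1$i))"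
    using le1 le2 by (simp add: ennreal_mult prod_nonneg)
  also have "(\<Prod>j\<in>UNIV. upd (u1 - l1) i (u2 - l2) $ j) * (u1$i - l1$i) = (\<Prod>b\<in>Basis. (u - l) \<bullet> b)"
    unfolding prod_Basis_pair prod_upd using prod_split_i[of "u1 - l1" i] by (simp add: lu)
  finally show "emeasure (distr lborel borel (Phi i)) (box l u) = (\<Prod>b\<in>Basis. (u - l) \<bullet> b)" .
qed simp


lemma nn_pair_iter:
  fixes H :: "(real^'n::finite) \<times> real \<Rightarrow> ennreal"
  assumes [measurable]: "H \<in> borel_measurable borel"
  shows "(\<integral>\<^sup>+c. \<integral>\<^sup>+z. H (c,z) \<partial>lborel \<partial>lborel) = (\<integral>\<^sup>+p. H p \<partial>lborel)"
proof -
  have "H \<in> borel_measurable (lborel \<Otimes>\<^sub>M lborel)" unfolding lborel_prod by simp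
  then have "(\<integral>\<^sup>+c. \<integral>\<^sup>+z. H (c,z) \<partial>lborel \<partial>lborel) = (\<integral>\<^sup>+p. H p \<partial>(lborel \<Otimes>\<^sub>M lborel))"
    by (rule lborel.nn_integral_fst)
  then show ?thesis unfolding lborel_prod .
qed

lemma swap_nn:
  fixes H :: "(real^'n::finite) \<times> real \<Rightarrow> ennreal"
  assumes [measurable]: "H \<in> borel_measurable borel"
  shows "(\<integral>\<^sup>+c. \<integral>\<^sup>+z. H (upd c i z, c$i) \<partial>lborel \<partial>lborel) = (\<integral>\<^sup>+c. \<integral>\<^sup>+z. H (c,z) \<partial>lborel \<partial>lborel)"
proof -
  have m: "(\<lambda>p. H (Phi i p)) \<in> borel_measurable borel" by measurable
  have "(\<integral>\<^sup>+c. \<integral>\<^sup>+z. H (upd c i z, c$i) \<partial>lborel \<partial>lborel) = (\<integral>\<^sup>+c. \<integral>\<^sup>+z. H (Phi i (c,z)) \<partial>lborel \<partial>lborel)"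
    by (simp add: Phi_def)
  also have "\<dots> = (\<integral>\<^sup>+p. H (Phi i p) \<partial>lborel)"
    by (rule nn_pair_iter[OF m])
  also have "\<dots> = (\<integral>\<^sup>+p. H p \<partial>(distr lborel borel (Phi i)))"
    by (rule nn_integral_distr[symmetric]) auto
  also have "\<dots> = (\<integral>\<^sup>+p. H p \<partial>lborel)" unfolding Phi_lborel ..
  also have "\<dots> = (\<integral>\<^sup>+c. \<integral>\<^sup>+z. H (c,z) \<partial>lborel \<partial>lborel)"
    by (rule nn_pair_iter[symmetric]) simp
  finally show ?thesis .
qed


lemma slice_sets: "S \<in> sets borel \<Longrightarrow> {z::real. upd (c::real^'n::finite) i z \<in> S} \<in> sets borel"
proof -
  assume S: "S \<in> sets borel"
  have "continuous_on UNIV (\<lambda>z. upd c i z)"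
    unfolding upd_alt by (intro continuous_intros)
  then have "(\<lambda>z. upd c i z) \<in> borel_measurable borel"
    by (rule borel_measurable_continuous_onI)
  then have "(\<lambda>z. upd c i z) -` S \<inter> space borel \<in> sets borel"
    using S by (rule measurable_sets)
  then show ?thesis by (simp add: vimage_def)
qed

lemma slice_ind_meas:
  assumes S: "S \<in> sets borel"
  shows "(\<lambda>(c::real^'n::finite, z::real). indicator S (upd c i z) :: ennreal) \<in> borel_measurable (lborel \<Otimes>\<^sub>M lborel)"
proof -
  have "(\<lambda>p. indicator S ((\<lambda>(c::real^'n, z::real). upd c i z) p) :: ennreal) \<in> borel_measurable borel"
    using S by measurable
  then show ?thesis unfolding lborel_prod by (simp add: case_prod_unfold)
qed

lemma slice_integral:
  fixes S :: "(real^'n::finite) set"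
  assumes S: "S \<in> sets borel"
  shows "(\<integral>\<^sup>+c. emeasure lborel {z. upd c i z \<in> S} \<partial>lborel) = emeasure lborel S * \<infinity>"
proof -
  have "(\<lambda>p::(real^'n) \<times> real. indicator S (fst p) :: ennreal) \<in> borel_measurable (borel \<Otimes>\<^sub>M borel)"
    by (rule measurable_compose[OF measurable_fst]) (use S in simp)
  then have H: "(\<lambda>p::(real^'n) \<times> real. indicator S (fst p) :: ennreal) \<in> borel_measurable borel"
    by (simp add: borel_prod)
  have "(\<integral>\<^sup>+c. emeasure lborel {z. upd c i z \<in> S} \<partial>lborel)
      = (\<integral>\<^sup>+c. \<integral>\<^sup>+z. indicator S (fst (upd c i z, c$i)) \<partial>lborel \<partial>lborel)"
  proof (rule nn_integral_cong)
    fix c :: "real^'n"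
    have "(\<integral>\<^sup>+z. indicator S (upd c i z) \<partial>lborel) = (\<integral>\<^sup>+z. indicator {z. upd c i z \<in> S} z \<partial>lborel)"
      by (rule nn_integral_cong) (auto simp: indicator_def)
    also have "\<dots> = emeasure lborel {z. upd c i z \<in> S}"
      using slice_sets[OF S] by (intro nn_integral_indicator) simp
    finally show "emeasure lborel {z. upd c i z \<in> S} = (\<integral>\<^sup>+z. indicator S (fst (upd c i z, c$i)) \<partial>lborel)"
      by simp
  qed
  also have "\<dots> = (\<integral>\<^sup>+c. \<integral>\<^sup>+z. indicator S (fst (c, z::real)) \<partial>lborel \<partial>lborel)"
    using swap_nn[OF H, of i] by simp
  also have "\<dots> = (\<integral>\<^sup>+c. (indicator S c * (\<infinity>::ennreal)) \<partial>lborel)"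
    by (simp add: nn_integral_const)
  also have "\<dots> = emeasure lborel S * \<infinity>"
    using S by (simp add: nn_integral_multc)
  finally show ?thesis .
qed

lemma null_by_slices:
  fixes S :: "(real^'n::finite) set"
  assumes S: "S \<in> sets borel" and sl: "\<And>c. {z. upd c i z \<in> S} \<in> null_sets lborel"
  shows "S \<in> null_sets lborel"
proof -
  have "\<And>c. emeasure lborel {z. upd c i z \<in> S} = 0"
    using sl by (auto simp: null_sets_def)
  then have "(\<integral>\<^sup>+c. emeasure lborel {z. upd c i z \<in> S} \<partial>lborel) = 0"
    by simp
  then have "emeasure lborel S * \<infinity> = 0" using slice_integral[OF S, of i] by simp
  then have "emeasure lborel S = 0" by (simp add: mult_eq_0_iff)
  then show ?thesis using S by (simp add: null_sets_def)
qed

lemma null_slices: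
  fixes S :: "(real^'n::finite) set"
  assumes S: "S \<in> null_sets lborel"
  shows "AE c in lborel. {z. upd c i z \<in> S} \<in> null_sets lborel"
proof -
  have Sb: "S \<in> sets borel" using S by (simp add: null_sets_def)
  have m: "(\<lambda>c. \<integral>\<^sup>+z. indicator S (upd c i z) \<partial>lborel) \<in> borel_measurable lborel"
    using lborel.borel_measurable_nn_integral_fst[OF slice_ind_meas[OF Sb, of i]] by simp
  have eq: "(\<integral>\<^sup>+z. indicator S (upd c i z) \<partial>lborel) = emeasure lborel {z. upd c i z \<in> S}" for c
  proof -
    have "(\<integral>\<^sup>+z. indicator S (upd c i z) \<partial>lborel) = (\<integral>\<^sup>+z. indicator {z. upd c i z \<in> S} z \<partial>lborel)"
      by (rule nn_integral_cong) (auto simp: indicator_def)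
    also have "\<dots> = emeasure lborel {z. upd c i z \<in> S}"
      using slice_sets[OF Sb] by (intro nn_integral_indicator) simp
    finally show ?thesis .
  qed
  have "(\<integral>\<^sup>+c. (\<integral>\<^sup>+z. indicator S (upd c i z) \<partial>lborel) \<partial>lborel) = 0"
    unfolding eq using slice_integral[OF Sb, of i] S by (simp add: null_sets_def)
  then have "AE c in lborel. (\<integral>\<^sup>+z. indicator S (upd c i z) \<partial>lborel) = 0"
    using nn_integral_0_iff_AE[OF m] by simp
  then show ?thesis
    by eventually_elim (use slice_sets[OF Sb] in \<open>auto simp: eq null_sets_def\<close>)
qed


lemma null_coord:
  assumes N: "N \<in> null_sets (lborel :: real measure)"
  shows "{c::real^'n::finite. c$j \<in> N} \<in> null_sets lborel"
proof (rule null_by_slices[of _ j])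
  have Nb: "N \<in> sets borel" using N by (simp add: null_sets_def)
  have "(\<lambda>c::real^'n. c$j) \<in> borel_measurable borel"
    by (intro borel_measurable_continuous_onI continuous_intros)
  then have "(\<lambda>c::real^'n. c$j) -` N \<inter> space borel \<in> sets borel"
    using Nb by (rule measurable_sets)
  then show "{c::real^'n. c$j \<in> N} \<in> sets borel" by (simp add: vimage_def)
  show "{z. upd c j z \<in> {c::real^'n. c$j \<in> N}} \<in> null_sets lborel" for c
    using N by simp
qed

lemma AE_coord:
  assumes "AE x in (lborel::real measure). P x"
  shows "AE c in (lborel :: (real^'n::finite) measure). P (c$j)"
proof -
  from assms obtain N where N: "{x. \<not> P x} \<subseteq> N" "N \<in> null_sets lborel"
    by (auto elim!: AE_E simp: null_sets_def)
  have "{c::real^'n. c$j \<in> N} \<in> null_sets lborel" by (rule null_coord[OF N(2)])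
  moreover have "{c::real^'n. \<not> P (c$j)} \<subseteq> {c. c$j \<in> N}" using N(1) by auto
  ultimately show ?thesis by (intro AE_I'[of "{c. c$j \<in> N}"]) auto
qed

context vwm_setting
begin

lemma C_deriv: "x \<in> {lo$j..hi$j} \<Longrightarrow> (C j has_vector_derivative dens j x) (at x within {lo$j..hi$j})"
  using density by (simp add: has_real_derivative_iff_has_vector_derivative)

lemma C_integral: assumes "a \<in> {lo$j..hi$j}" "b \<in> {lo$j..hi$j}" "a \<le> b"
  shows "(dens j has_integral (C j b - C j a)) {a..b}"
proof (rule fundamental_theorem_of_calculus[OF assms(3)])
  fix x assume x: "x \<in> {a..b}"
  have sub: "{a..b} \<subseteq> {lo$j..hi$j}" using assms by auto
  then have "x \<in> {lo$j..hi$j}" using x by auto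
  from C_deriv[OF this] show "(C j has_vector_derivative dens j x) (at x within {a..b})"
    by (rule has_vector_derivative_within_subset[OF _ sub])
qed

lemma C_cont: "continuous_on {lo$j..hi$j} (C j)"
  by (rule DERIV_continuous_on[of _ _ "dens j"]) (use density in auto)

lemma dens_nonneg: "x \<in> {lo$j..hi$j} \<Longrightarrow> 0 \<le> dens j x"
  using dens_pos by (simp add: less_imp_le)

lemma C_range: assumes "t \<in> {lo$j..hi$j}" shows "0 \<le> C j t" "C j t \<le> 1"
proof -
  have "lo$j \<in> {lo$j..hi$j}" "hi$j \<in> {lo$j..hi$j}" using lohi[rule_format, of j] by auto
  note I1 = C_integral[OF this(1) assms] and I2 = C_integral[OF assms this(2)]
  have "0 \<le> C j t - C j (lo$j)"
    by (rule has_integral_nonneg[OF I1]) (use assms in \<open>auto intro!: dens_nonneg\<close>)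
  then show "0 \<le> C j t" using cdf_lo by auto
  have "0 \<le> C j (hi$j) - C j t"
    by (rule has_integral_nonneg[OF I2]) (use assms in \<open>auto intro!: dens_nonneg\<close>)
  then show "C j t \<le> 1" using cdf_hi by auto
qed

definition "dprop j g \<longleftrightarrow> g \<in> borel_measurable borel \<and> (\<forall>x. 0 \<le> g x) \<and>
   (\<forall>x. x \<notin> {lo$j..hi$j} \<longrightarrow> g x = 0) \<and> (AE x in lborel. x \<in> {lo$j..hi$j} \<longrightarrow> dens j x = g x)"

lemma dprop_ex: "\<exists>g. dprop j g"
proof -
  have "lo$j \<in> {lo$j..hi$j}" "hi$j \<in> {lo$j..hi$j}" "lo$j \<le> hi$j" using lohi[rule_format, of j] by auto
  from C_integral[OF this] have "(dens j has_integral (C j (hi$j) - C j (lo$j))) {lo$j..hi$j}" .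
  from has_integral_implies_lebesgue_measurable_real[OF this]
  have "(\<lambda>x. dens j x * indicator {lo$j..hi$j} x) \<in> borel_measurable (completion lborel)" by simp
  from completion_ex_borel_measurable_real[OF this]
  obtain g0 where g0: "g0 \<in> borel_measurable lborel"
    "AE x in lborel. dens j x * indicator {lo$j..hi$j} x = g0 x" by auto
  define g where "g x = indicator {lo$j..hi$j} x * max 0 (g0 x)" for x
  have "g \<in> borel_measurable borel" unfolding g_def using g0(1) by measurable
  moreover have "\<forall>x. 0 \<le> g x" by (auto simp: g_def)
  moreover have "\<forall>x. x \<notin> {lo$j..hi$j} \<longrightarrow> g x = 0" by (auto simp: g_def)
  moreover have "AE x in lborel. x \<in> {lo$j..hi$j} \<longrightarrow> dens j x = g x"
    using g0(2)
  proof eventually_elim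
    case (elim x)
    show ?case
    proof
      assume x: "x \<in> {lo$j..hi$j}"
      then have "0 < dens j x" using dens_pos by auto
      then show "dens j x = g x" using elim x by (simp add: g_def)
    qed
  qed
  ultimately show ?thesis unfolding dprop_def by blast
qed

definition "dd j = (SOME g. dprop j g)"

lemma dd: "dprop j (dd j)"
  unfolding dd_def using dprop_ex by (rule someI_ex)

lemma dd_meas[measurable]: "dd j \<in> borel_measurable borel"
  using dd[of j] unfolding dprop_def by auto
lemma dd_nonneg: "0 \<le> dd j x"
  using dd[of j] unfolding dprop_def by auto
lemma dd_out: "x \<notin> {lo$j..hi$j} \<Longrightarrow> dd j x = 0"
  using dd[of j] unfolding dprop_def by auto
lemma dd_AE: "AE x in lborel. x \<in> {lo$j..hi$j} \<longrightarrow> dens j x = dd j x"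
  using dd[of j] unfolding dprop_def by auto

lemma dd_integral: assumes t: "t \<in> {lo$j..hi$j}"
  shows "(\<integral>\<^sup>+x. ennreal (dd j x) * indicator {..t} x \<partial>lborel) = ennreal (C j t)"
proof -
  have lo: "lo$j \<in> {lo$j..hi$j}" using lohi[rule_format, of j] by auto
  have "(dens j has_integral (C j t - C j (lo$j))) {lo$j..t}"
    using C_integral[OF lo t] t by auto
  then have I: "(dens j has_integral C j t) {lo$j..t}" using cdf_lo by simp
  have "AE x in lborel. x \<in> {lo$j..t} \<longrightarrow> dd j x = dens j x"
      using dd_AE[of j] by eventually_elim (use t in auto)
  then have "(dd j has_integral C j t) {lo$j..t} \<longleftrightarrow> (dens j has_integral C j t) {lo$j..t}"
    by (rule has_integral_AE)
  then have "(dd j has_integral C j t) {lo$j..t}" using I by simp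
  then have "(\<integral>\<^sup>+x. ennreal (dd j x) * indicator {lo$j..t} x \<partial>lborel) = ennreal (C j t)"
    by (intro nn_integral_has_integral_lebesgue') (auto simp: dd_nonneg)
  moreover have "(\<lambda>x. ennreal (dd j x) * indicator {..t} x) = (\<lambda>x. ennreal (dd j x) * indicator {lo$j..t} x)"
    using dd_out[of _ j] by (auto simp: indicator_def fun_eq_iff)
  ultimately show ?thesis by simp
qed

definition "wt c = (\<Prod>j\<in>UNIV. dd j (c$j))"
definition "wm i c = (\<Prod>j\<in>UNIV-{i}. dd j (c$j))"
definition "w c = (\<Prod>j\<in>UNIV. dens j (c$j))"

lemma wt_meas[measurable]: "wt \<in> borel_measurable borel"
proof -
  have "(\<lambda>c::real^'n. c$j) \<in> borel_measurable borel" for j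
    by (intro borel_measurable_continuous_onI continuous_intros)
  then show ?thesis unfolding wt_def by measurable
qed

lemma wm_meas[measurable]: "wm i \<in> borel_measurable borel"
proof -
  have "(\<lambda>c::real^'n. c$j) \<in> borel_measurable borel" for j
    by (intro borel_measurable_continuous_onI continuous_intros)
  then show ?thesis unfolding wm_def by measurable
qed

lemma wt_nonneg: "0 \<le> wt c" unfolding wt_def by (intro prod_nonneg) (auto simp: dd_nonneg)
lemma wm_nonneg: "0 \<le> wm i c" unfolding wm_def by (intro prod_nonneg) (auto simp: dd_nonneg)

lemma wt_split: "wt c = dd i (c$i) * wm i c"
  unfolding wt_def wm_def by (rule prod.remove) auto

lemma wm_upd[simp]: "wm i (upd c i z) = wm i c"
  unfolding wm_def by (rule prod.cong) auto

lemma wt_out: "c \<notin> B \<Longrightarrow> wt c = 0"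
proof -
  assume "c \<notin> B"
  then obtain j where "c$j \<notin> {lo$j..hi$j}" using B_iff by auto
  then have "dd j (c$j) = 0" by (rule dd_out)
  then show "wt c = 0" unfolding wt_def by (intro prod_zero) auto
qed

lemma wt_nn_integral: "(\<integral>\<^sup>+c. ennreal (wt c) \<partial>lborel) = 1"
proof -
  have "(\<integral>\<^sup>+c. ennreal (wt c) \<partial>lborel) = (\<integral>\<^sup>+c. (\<Prod>j\<in>UNIV. ennreal (dd j (c$j))) \<partial>lborel)"
    unfolding wt_def by (intro nn_integral_cong) (simp add: prod_ennreal dd_nonneg)
  also have "\<dots> = (\<Prod>j\<in>UNIV. \<integral>\<^sup>+x. ennreal (dd j x) \<partial>lborel)"
  proof -
    define F where "F b x = ennreal (dd (SOME j. b = axis j (1::real)) x)" for b :: "real^'n" and x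
    have Fa: "F (axis j 1) = (\<lambda>x. ennreal (dd j x))" for j
    proof -
      have "(SOME j'. axis j (1::real) = axis j' 1) = j"
        by (rule some_equality) (auto simp: axis_eq_axis)
      then show ?thesis by (simp add: F_def fun_eq_iff)
    qed
    have "(\<integral>\<^sup>+c. (\<Prod>b\<in>Basis. F b (c \<bullet> b)) \<partial>lborel) = (\<Prod>b\<in>Basis. \<integral>\<^sup>+x. F b x \<partial>lborel)"
      by (rule nn_integral_lborel_prod) (auto simp: F_def)
    moreover have "(\<Prod>b\<in>Basis. F b (c \<bullet> b)) = (\<Prod>j\<in>UNIV. ennreal (dd j (c$j)))" for c :: "real^'n"
      by (simp add: prod_Basis_cart2 Fa)
    moreover have "(\<Prod>b\<in>Basis. \<integral>\<^sup>+x. F b x \<partial>lborel) = (\<Prod>j\<in>UNIV. \<integral>\<^sup>+x. ennreal (dd j x) \<partial>lborel)"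
      using prod_Basis_cart2[of "\<lambda>b _. \<integral>\<^sup>+x. F b x \<partial>lborel" 0] by (simp add: Fa)
    ultimately show ?thesis by simp
  qed
  also have "\<dots> = (\<Prod>j\<in>(UNIV::'n set). 1)"
  proof -
    have *: "(\<integral>\<^sup>+x. ennreal (dd j x) \<partial>lborel) = 1" for j
  proof -
    have hi: "hi$j \<in> {lo$j..hi$j}" using lohi[rule_format, of j] by auto
    have "(\<integral>\<^sup>+x. ennreal (dd j x) \<partial>lborel) = (\<integral>\<^sup>+x. ennreal (dd j x) * indicator {..hi$j} x \<partial>lborel)"
      by (intro nn_integral_cong) (auto simp: indicator_def dd_out)
    also have "\<dots> = 1" using dd_integral[OF hi] cdf_hi by simp
    finally show "(\<integral>\<^sup>+x. ennreal (dd j x) \<partial>lborel) = 1" .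
  qed
  show ?thesis by (simp add: *)
  qed
  finally show ?thesis by simp
qed


definition "galloc (g :: 'n \<Rightarrow> real^'n \<Rightarrow> real) \<longleftrightarrow> (\<forall>i. g i \<in> borel_measurable borel) \<and> (\<forall>i c. g i c \<in> {0,1}) \<and> (\<forall>i c. c \<notin> B \<longrightarrow> g i c = 0)"

definition "Cc j t = indicator {lo$j..hi$j} t * C j t"
definition "Gi g i c = (\<integral>\<^sup>+z. ennreal (if c$i \<le> z then g i (upd c i z) else 0) \<partial>lborel)"
definition "Gh g i c = enn2real (Gi g i c)"
definition "AA g i c = (pbar$i - c$i) * lam i (pbar$i) * g i c * wt c"
definition "DD g i c = lam i (pbar$i) * wt c * Gh g i c"
definition "EE g i c = lam i (pbar$i) * g i c * wm i c * Cc i (c$i)"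

lemma nth_meas[measurable]: "(\<lambda>c::real^'n. c$j) \<in> borel_measurable borel"
  by (intro borel_measurable_continuous_onI continuous_intros)

lemma Cc_meas[measurable]: "Cc j \<in> borel_measurable borel"
proof -
  have "(\<lambda>x. indicator {lo$j..hi$j} x *\<^sub>R C j x) \<in> borel_measurable borel"
    by (rule borel_measurable_continuous_on_indicator[OF _ C_cont]) simp
  then show ?thesis unfolding Cc_def by simp
qed

lemma galloc_meas: "galloc g \<Longrightarrow> g i \<in> borel_measurable borel"
  unfolding galloc_def by auto
lemma galloc_01: "galloc g \<Longrightarrow> g i c \<in> {0,1}"
  unfolding galloc_def by auto
lemma galloc_out: "galloc g \<Longrightarrow> c \<notin> B \<Longrightarrow> g i c = 0"
  unfolding galloc_def by auto
lemma galloc_nonneg: "galloc g \<Longrightarrow> 0 \<le> g i c"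
  using galloc_01[of g i c] by auto
lemma galloc_le1: "galloc g \<Longrightarrow> g i c \<le> 1"
  using galloc_01[of g i c] by auto

lemma upd_pair_meas[measurable]: "(\<lambda>p::(real^'n) \<times> real. upd (fst p) i (snd p)) \<in> borel_measurable borel"
  using upd_measurable[of i] by (simp add: case_prod_unfold)

lemma Gi_integrand_meas:
  assumes g: "galloc g"
  shows "(\<lambda>p::(real^'n) \<times> real. ennreal (if (fst p)$i \<le> snd p then g i (upd (fst p) i (snd p)) else 0))
     \<in> borel_measurable borel"
proof -
  have [measurable]: "g i \<in> borel_measurable borel" using galloc_meas[OF g] .
  have [measurable]: "(\<lambda>p::(real^'n) \<times> real. (fst p)$i) \<in> borel_measurable borel"
    by (intro borel_measurable_continuous_onI continuous_intros)
  have [measurable]: "(\<lambda>p::(real^'n) \<times> real. snd p) \<in> borel_measurable borel"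
    by (intro borel_measurable_continuous_onI continuous_intros)
  show ?thesis by measurable
qed

lemma Gi_meas[measurable]: assumes g: "galloc g" shows "Gi g i \<in> borel_measurable borel"
proof -
  have "(\<lambda>p::(real^'n) \<times> real. ennreal (if (fst p)$i \<le> snd p then g i (upd (fst p) i (snd p)) else 0))
     \<in> borel_measurable (lborel \<Otimes>\<^sub>M lborel)"
    unfolding lborel_prod using Gi_integrand_meas[OF g] by simp
  note lborel.borel_measurable_nn_integral_fst[OF this, unfolded fst_conv snd_conv]
  then show ?thesis unfolding Gi_def by (simp add: measurable_lborel1)
qed

lemma Gi_bound: assumes g: "galloc g" and c: "c \<in> B"
  shows "Gi g i c \<le> ennreal (hi$i - c$i)"
proof -
  have "Gi g i c \<le> (\<integral>\<^sup>+z. indicator {c$i..hi$i} z \<partial>lborel)"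
    unfolding Gi_def
  proof (rule nn_integral_mono)
    fix z
    show "ennreal (if c$i \<le> z then g i (upd c i z) else 0) \<le> indicator {c$i..hi$i} z"
    proof (cases "c$i \<le> z \<and> z \<le> hi$i")
      case True then show ?thesis using galloc_le1[OF g] by (auto simp: indicator_def)
    next
      case False
      then have "c$i \<le> z \<Longrightarrow> upd c i z \<notin> B" by (auto simp: B_iff)
      then show ?thesis using False galloc_out[OF g] by (auto simp: indicator_def)
    qed
  qed
  also have "\<dots> = ennreal (hi$i - c$i)" using c B_iff by auto
  finally show ?thesis .
qed

lemma Gi_finite: "galloc g \<Longrightarrow> c \<in> B \<Longrightarrow> Gi g i c \<noteq> \<infinity>"
  using Gi_bound[of g c i] by (auto simp: top_unique)

lemma KEY:
  assumes g: "galloc g"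
  shows "(\<integral>\<^sup>+c. ennreal (DD g i c) \<partial>lborel) = (\<integral>\<^sup>+c. ennreal (EE g i c) \<partial>lborel)"
proof -
  define L where "L = lam i (pbar$i)"
  have L: "0 < L" using lam L_def by auto
  have [measurable]: "g i \<in> borel_measurable borel" using galloc_meas[OF g] .
  define H where "H p = ennreal (L * g i (fst p) * wm i (fst p) * dd i (snd p) * (if snd p \<le> (fst p)$i then 1 else 0))"
    for p :: "(real^'n) \<times> real"
  have Hm: "H \<in> borel_measurable borel"
  proof -
    have [measurable]: "(\<lambda>p::(real^'n) \<times> real. (fst p)$i) \<in> borel_measurable borel"
      by (intro borel_measurable_continuous_onI continuous_intros)
    have [measurable]: "(\<lambda>p::(real^'n) \<times> real. snd p) \<in> borel_measurable borel"
      by (intro borel_measurable_continuous_onI continuous_intros)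
    have [measurable]: "(\<lambda>p::(real^'n) \<times> real. fst p) \<in> borel_measurable borel"
      by (intro borel_measurable_continuous_onI continuous_intros)
    show ?thesis unfolding H_def by measurable
  qed
  have lhs: "(\<integral>\<^sup>+z. H (upd c i z, c$i) \<partial>lborel) = ennreal (DD g i c)" for c
  proof -
    have "(\<integral>\<^sup>+z. H (upd c i z, c$i) \<partial>lborel)
        = (\<integral>\<^sup>+z. ennreal (L * wt c) * ennreal (if c$i \<le> z then g i (upd c i z) else 0) \<partial>lborel)"
      by (intro nn_integral_cong)
        (auto simp: H_def wt_split[of c i] ennreal_mult'[symmetric] L wt_nonneg galloc_nonneg[OF g]
          wm_nonneg dd_nonneg mult_ac)
    also have "\<dots> = ennreal (L * wt c) * Gi g i c"
      unfolding Gi_def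
    proof (rule nn_integral_cmult)
      have "(\<lambda>z. upd c i z) \<in> borel_measurable borel"
        unfolding upd_alt by (intro borel_measurable_continuous_onI continuous_intros)
      then show "(\<lambda>z. ennreal (if c$i \<le> z then g i (upd c i z) else 0)) \<in> borel_measurable lborel"
        by (simp add: measurable_lborel1)
    qed
    also have "\<dots> = ennreal (DD g i c)"
    proof (cases "c \<in> B")
      case True
      have "Gi g i c = ennreal (Gh g i c)"
        unfolding Gh_def using Gi_finite[OF g True] by (simp add: ennreal_enn2real_if)
      then have "ennreal (L * wt c) * Gi g i c = ennreal (L * wt c) * ennreal (Gh g i c)" by simp
      also have "\<dots> = ennreal (L * wt c * Gh g i c)"
        by (rule ennreal_mult[symmetric]) (use L wt_nonneg in \<open>auto simp: Gh_def\<close>)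
      finally show ?thesis by (simp add: DD_def L_def)
    next
      case False then show ?thesis by (simp add: DD_def wt_out)
    qed
    finally show ?thesis .
  qed
  have rhs: "(\<integral>\<^sup>+z. H (c, z) \<partial>lborel) = ennreal (EE g i c)" for c
  proof -
    have "(\<integral>\<^sup>+z. H (c, z) \<partial>lborel) = (\<integral>\<^sup>+z. ennreal (L * g i c * wm i c) * (ennreal (dd i z) * indicator {..c$i} z) \<partial>lborel)"
      by (intro nn_integral_cong)
        (auto simp: H_def ennreal_mult'[symmetric] L galloc_nonneg[OF g] wm_nonneg dd_nonneg mult_ac indicator_def)
    also have "\<dots> = ennreal (L * g i c * wm i c) * (\<integral>\<^sup>+z. ennreal (dd i z) * indicator {..c$i} z \<partial>lborel)"
      by (rule nn_integral_cmult) simp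
    also have "\<dots> = ennreal (EE g i c)"
    proof (cases "c \<in> B")
      case True
      then have ci: "c$i \<in> {lo$i..hi$i}" using B_iff by auto
      show ?thesis using ci
        by (simp add: dd_integral[OF ci] EE_def L_def Cc_def ennreal_mult'[symmetric] C_range(1) galloc_nonneg[OF g] wm_nonneg lam less_imp_le)
    next
      case False then show ?thesis by (simp add: EE_def galloc_out[OF g])
    qed
    finally show ?thesis .
  qed
  have "(\<integral>\<^sup>+c. ennreal (DD g i c) \<partial>lborel) = (\<integral>\<^sup>+c. \<integral>\<^sup>+z. H (upd c i z, c$i) \<partial>lborel \<partial>lborel)"
    by (simp add: lhs)
  also have "\<dots> = (\<integral>\<^sup>+c. \<integral>\<^sup>+z. H (c, z) \<partial>lborel \<partial>lborel)"
    by (rule swap_nn[OF Hm])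
  also have "\<dots> = (\<integral>\<^sup>+c. ennreal (EE g i c) \<partial>lborel)"
    by (simp add: rhs)
  finally show ?thesis .
qed


lemma wt_integrable: "integrable lborel wt"
  by (rule integrableI_nonneg) (auto simp: wt_nonneg wt_nn_integral measurable_lborel1)

lemma AA_meas[measurable]: "galloc g \<Longrightarrow> AA g i \<in> borel_measurable lborel"
  using galloc_meas[of g i] unfolding AA_def measurable_lborel1 by measurable
lemma DD_meas[measurable]: "galloc g \<Longrightarrow> DD g i \<in> borel_measurable lborel"
  using Gi_meas[of g i] unfolding DD_def Gh_def measurable_lborel1 by measurable
lemma EE_meas[measurable]: "galloc g \<Longrightarrow> EE g i \<in> borel_measurable lborel"
  using galloc_meas[of g i] unfolding EE_def measurable_lborel1 by measurable

lemma AA_integrable: assumes g: "galloc g" shows "integrable lborel (AA g i)"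
proof (rule Bochner_Integration.integrable_bound[OF integrable_mult_right[OF wt_integrable, of "\<bar>pbar$i\<bar> + \<bar>lo$i\<bar> + \<bar>hi$i\<bar>"]])
  show "AA g i \<in> borel_measurable lborel" using AA_meas[OF g] .
  show "AE x in lborel. norm (AA g i x) \<le> norm ((\<bar>pbar$i\<bar> + \<bar>lo$i\<bar> + \<bar>hi$i\<bar>) * wt x)"
  proof (rule AE_I2)
    fix c
    show "norm (AA g i c) \<le> norm ((\<bar>pbar$i\<bar> + \<bar>lo$i\<bar> + \<bar>hi$i\<bar>) * wt c)"
    proof (cases "c \<in> B")
      case True
      then have ci: "lo$i \<le> c$i" "c$i \<le> hi$i" using B_iff by auto
      have a: "\<bar>pbar$i - c$i\<bar> \<le> \<bar>pbar$i\<bar> + \<bar>lo$i\<bar> + \<bar>hi$i\<bar>" using ci by linarith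
      have b: "\<bar>lam i (pbar$i) * g i c\<bar> \<le> 1"
      proof -
        have "0 < lam i (pbar$i)" "lam i (pbar$i) \<le> 1" using lam by auto
        then show ?thesis
          using galloc_nonneg[OF g, of i c] galloc_le1[OF g, of i c]
          by (auto simp: abs_mult intro!: mult_le_one)
      qed
      have "\<bar>AA g i c\<bar> = \<bar>pbar$i - c$i\<bar> * \<bar>lam i (pbar$i) * g i c\<bar> * wt c"
        by (simp add: AA_def abs_mult wt_nonneg)
      also have "\<dots> \<le> (\<bar>pbar$i\<bar> + \<bar>lo$i\<bar> + \<bar>hi$i\<bar>) * 1 * wt c"
        by (intro mult_right_mono mult_mono a b) (auto simp: wt_nonneg)
      finally show ?thesis by (simp add: abs_mult wt_nonneg)
    next
      case False then show ?thesis by (simp add: AA_def wt_out)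
    qed
  qed
qed

lemma Gh_nonneg: "0 \<le> Gh g i c" unfolding Gh_def by simp

lemma Gh_bound: "galloc g \<Longrightarrow> c \<in> B \<Longrightarrow> Gh g i c \<le> hi$i - c$i"
  unfolding Gh_def using B_iff by (intro enn2real_leI Gi_bound) auto

lemma DD_nonneg: "galloc g \<Longrightarrow> 0 \<le> DD g i c"
  unfolding DD_def using lam by (intro mult_nonneg_nonneg) (auto simp: wt_nonneg Gh_nonneg less_imp_le)

lemma EE_nonneg: "galloc g \<Longrightarrow> 0 \<le> EE g i c"
proof (cases "c \<in> B")
  case True
  assume g: "galloc g"
  have "0 \<le> Cc i (c$i)" using True B_iff C_range(1) by (auto simp: Cc_def)
  then show ?thesis unfolding EE_def using lam
    by (intro mult_nonneg_nonneg) (auto simp: wm_nonneg galloc_nonneg[OF g] less_imp_le)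
next
  case False
  assume g: "galloc g"
  then show ?thesis by (simp add: EE_def galloc_out[OF g False])
qed

lemma DD_integrable: assumes g: "galloc g" shows "integrable lborel (DD g i)"
proof (rule Bochner_Integration.integrable_bound[OF integrable_mult_right[OF wt_integrable, of "hi$i - lo$i"]])
  show "DD g i \<in> borel_measurable lborel" using DD_meas[OF g] .
  show "AE x in lborel. norm (DD g i x) \<le> norm ((hi$i - lo$i) * wt x)"
  proof (rule AE_I2)
    fix c
    show "norm (DD g i c) \<le> norm ((hi$i - lo$i) * wt c)"
    proof (cases "c \<in> B")
      case True
      then have ci: "lo$i \<le> c$i" "c$i \<le> hi$i" using B_iff by auto
      have "Gh g i c \<le> hi$i - lo$i" using Gh_bound[OF g True, of i] ci by linarith
      moreover have "lam i (pbar$i) \<le> 1" "0 \<le> lam i (pbar$i)" using lam less_imp_le by auto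
      ultimately have "lam i (pbar$i) * Gh g i c \<le> 1 * (hi$i - lo$i)"
        by (intro mult_mono) (auto simp: Gh_nonneg)
      then have "DD g i c \<le> (hi$i - lo$i) * wt c"
        unfolding DD_def using wt_nonneg[of c]
        by (metis mult.assoc mult.commute mult.left_neutral mult_right_mono)
      moreover have "0 \<le> (hi$i - lo$i) * wt c" using ci wt_nonneg[of c] by simp
      ultimately show ?thesis using DD_nonneg[OF g, of i c] by simp
    next
      case False then show ?thesis by (simp add: DD_def wt_out)
    qed
  qed
qed

lemma EE_integrable: assumes g: "galloc g" shows "integrable lborel (EE g i)"
proof (rule integrableI_nonneg)
  show "EE g i \<in> borel_measurable lborel" using EE_meas[OF g] .
  show "AE x in lborel. 0 \<le> EE g i x" using EE_nonneg[OF g] by simp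
  have "(\<integral>\<^sup>+c. ennreal (DD g i c) \<partial>lborel) \<noteq> \<infinity>"
    using integrableD(2)[OF DD_integrable[OF g]] .
  then show "(\<integral>\<^sup>+c. ennreal (EE g i c) \<partial>lborel) < \<infinity>"
    using KEY[OF g, of i] by (simp add: less_top)
qed

lemma DD_EE_integral: assumes g: "galloc g"
  shows "(\<integral>c. DD g i c \<partial>lborel) = (\<integral>c. EE g i c \<partial>lborel)"
proof -
  have "(\<integral>c. DD g i c \<partial>lborel) = enn2real (\<integral>\<^sup>+c. ennreal (DD g i c) \<partial>lborel)"
    by (rule integral_eq_nn_integral) (use DD_meas[OF g] DD_nonneg[OF g] in auto)
  also have "\<dots> = enn2real (\<integral>\<^sup>+c. ennreal (EE g i c) \<partial>lborel)" using KEY[OF g] by simp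
  also have "\<dots> = (\<integral>c. EE g i c \<partial>lborel)"
    by (rule integral_eq_nn_integral[symmetric]) (use EE_meas[OF g] EE_nonneg[OF g] in auto)
  finally show ?thesis .
qed


lemma Gh_integral: assumes g: "galloc g" and c: "c \<in> B"
  shows "Gh g i c = integral {c$i..hi$i} (\<lambda>z. g i (upd c i z))"
proof -
  let ?f = "\<lambda>z. g i (upd c i z)"
  have um: "(\<lambda>z. upd c i z) \<in> borel_measurable borel"
    unfolding upd_alt by (intro borel_measurable_continuous_onI continuous_intros)
  have fm[measurable]: "?f \<in> borel_measurable borel"
    using measurable_compose[OF um galloc_meas[OF g]] by (simp add: comp_def)
  have "Gi g i c = (\<integral>\<^sup>+z\<in>{c$i..hi$i}. ennreal (?f z) \<partial>lborel)"
    unfolding Gi_def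
  proof (rule nn_integral_cong)
    fix z
    show "ennreal (if c$i \<le> z then g i (upd c i z) else 0) = ennreal (?f z) * indicator {c$i..hi$i} z"
    proof (cases "z \<le> hi$i")
      case False
      then have "upd c i z \<notin> B" by (auto simp: B_iff)
      then show ?thesis using False galloc_out[OF g] by (auto simp: indicator_def)
    qed (auto simp: indicator_def)
  qed
  also have "\<dots> = ennreal (integral {c$i..hi$i} ?f)"
  proof (rule set_nn_integral_lborel_eq_integral)
    show "set_borel_measurable borel {c$i..hi$i} ?f"
      unfolding set_borel_measurable_def by measurable
    show "\<And>x. x \<in> {c$i..hi$i} \<Longrightarrow> 0 \<le> ?f x" using galloc_nonneg[OF g] by auto
    have "(\<integral>\<^sup>+z\<in>{c$i..hi$i}. ennreal (?f z) \<partial>lborel) = Gi g i c"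
      using calculation by simp
    then show "(\<integral>\<^sup>+z\<in>{c$i..hi$i}. ennreal (?f z) \<partial>lborel) < \<infinity>"
      using Gi_finite[OF g c, of i] by (simp add: less_top)
  qed
  finally have "Gi g i c = ennreal (integral {c$i..hi$i} ?f)" .
  moreover have "0 \<le> integral {c$i..hi$i} ?f"
  proof (cases "?f integrable_on {c$i..hi$i}")
    case True then show ?thesis by (rule integral_nonneg) (use galloc_nonneg[OF g] in auto)
  next
    case False then show ?thesis by (simp add: not_integrable_integral)
  qed
  ultimately show ?thesis unfolding Gh_def by simp
qed

lemma revenue_eq:
  fixes \<pi>0 x0 :: "'n \<Rightarrow> real^'n \<Rightarrow> real^'n \<Rightarrow> real" and g
  assumes g: "galloc g"
    and ae: "\<And>i. AE c in lborel. c \<in> B \<longrightarrow> \<pi>0 i c pbar = g i c"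
    and pay: "\<And>i c. c \<in> B \<Longrightarrow> x0 i c pbar = val lam i (c$i) (pbar$i) * \<pi>0 i c pbar
        - lam i (pbar$i) * integral {c$i..hi$i} (\<lambda>z. \<pi>0 i (upd c i z) pbar)"
  shows "revenue dens lo hi x0 pbar = (\<integral>c. (\<Sum>i\<in>UNIV. AA g i c - EE g i c) \<partial>lborel)"
proof -
  define R where "R = (\<integral>c. (\<Sum>i\<in>UNIV. AA g i c - EE g i c) \<partial>lborel)"
  define F where "F c = (\<Sum>i\<in>UNIV. x0 i c pbar) * (\<Prod>i\<in>UNIV. dens i (c$i))" for c
  have intAD: "integrable lborel (\<lambda>c. \<Sum>i\<in>UNIV. AA g i c - DD g i c)"
    using AA_integrable[OF g] DD_integrable[OF g] by auto
  have "(\<integral>c. (\<Sum>i\<in>UNIV. AA g i c - DD g i c) \<partial>lborel) = (\<Sum>i\<in>UNIV. (\<integral>c. AA g i c \<partial>lborel) - (\<integral>c. DD g i c \<partial>lborel))"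
    using AA_integrable[OF g] DD_integrable[OF g] by (simp add: integral_sum integral_diff)
  also have "\<dots> = (\<Sum>i\<in>UNIV. (\<integral>c. AA g i c \<partial>lborel) - (\<integral>c. EE g i c \<partial>lborel))"
    by (simp add: DD_EE_integral[OF g])
  also have "\<dots> = R"
    unfolding R_def using AA_integrable[OF g] EE_integrable[OF g] by (simp add: integral_sum integral_diff)
  finally have "(\<integral>c. (\<Sum>i\<in>UNIV. AA g i c - DD g i c) \<partial>lborel) = R" .
  with has_integral_integral_lborel[OF intAD]
  have hi: "((\<lambda>c. \<Sum>i\<in>UNIV. AA g i c - DD g i c) has_integral R) UNIV" by simp
  have "\<forall>i. \<exists>N. N \<in> null_sets lborel \<and> {c. \<not> (c \<in> B \<longrightarrow> \<pi>0 i c pbar = g i c)} \<subseteq> N"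
  proof
    fix i
    from ae[of i] obtain N where "{c \<in> space lborel. \<not> (c \<in> B \<longrightarrow> \<pi>0 i c pbar = g i c)} \<subseteq> N"
      "N \<in> null_sets lborel" by (auto elim!: AE_E simp: null_sets_def)
    then show "\<exists>N. N \<in> null_sets lborel \<and> {c. \<not> (c \<in> B \<longrightarrow> \<pi>0 i c pbar = g i c)} \<subseteq> N" by auto
  qed
  then obtain N where N: "\<And>i. N i \<in> null_sets lborel"
    "\<And>i. {c. \<not> (c \<in> B \<longrightarrow> \<pi>0 i c pbar = g i c)} \<subseteq> N i" by metis
  have AE1: "AE c in lborel. \<forall>j\<in>UNIV. c$j \<in> {lo$j..hi$j} \<longrightarrow> dens j (c$j) = dd j (c$j)"
  proof (rule AE_finite_allI)
    fix j :: 'n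
    show "AE c in lborel. c$j \<in> {lo$j..hi$j} \<longrightarrow> dens j (c$j) = dd j (c$j)"
      by (rule AE_coord[OF dd_AE])
  qed simp
  have AE2: "AE c in lborel. \<forall>i\<in>UNIV. c \<in> B \<longrightarrow> \<pi>0 i c pbar = g i c"
    by (rule AE_finite_allI) (auto intro: ae)
  have AE3: "AE c in lborel. \<forall>i\<in>UNIV. {z. upd c i z \<in> N i} \<in> null_sets lborel"
    by (rule AE_finite_allI) (auto intro: null_slices[OF N(1)])
  have AEeq: "AE c in lborel. c \<in> UNIV \<longrightarrow> (if c \<in> B then F c else 0) = (\<Sum>i\<in>UNIV. AA g i c - DD g i c)"
    using AE1 AE2 AE3
  proof eventually_elim
    case (elim c)
    show ?case
    proof (cases "c \<in> B")
      case False
      then show ?thesis by (simp add: AA_def DD_def wt_out)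
    next
      case cB: True
      have w: "(\<Prod>i\<in>UNIV. dens i (c$i)) = wt c"
        unfolding wt_def using elim(1) cB B_iff by (intro prod.cong) auto
      have int: "integral {c$i..hi$i} (\<lambda>z. \<pi>0 i (upd c i z) pbar) = Gh g i c" for i
      proof -
        have "integral {c$i..hi$i} (\<lambda>z. \<pi>0 i (upd c i z) pbar) = integral {c$i..hi$i} (\<lambda>z. g i (upd c i z))"
        proof (rule integral_spike)
          show "negligible {z. upd c i z \<in> N i}"
            unfolding negligible_iff_null_sets using elim(3) by (auto intro: null_sets_completionI)
          fix z assume z: "z \<in> {c$i..hi$i} - {z. upd c i z \<in> N i}"
          have "lo$i \<le> c$i" using cB B_iff by auto
          then have "upd c i z \<in> B" using z cB by (intro upd_in_B) auto
          then show "g i (upd c i z) = \<pi>0 i (upd c i z) pbar" using z N(2)[of i] by auto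
        qed
        also have "\<dots> = Gh g i c" by (rule Gh_integral[OF g cB, symmetric])
        finally show ?thesis .
      qed
      have "F c = (\<Sum>i\<in>UNIV. x0 i c pbar * wt c)"
        unfolding F_def w by (simp add: sum_distrib_right)
      also have "\<dots> = (\<Sum>i\<in>UNIV. AA g i c - DD g i c)"
      proof (rule sum.cong[OF refl])
        fix i
        have "\<pi>0 i c pbar = g i c" using elim(2) cB by auto
        then have x: "x0 i c pbar = (pbar$i - c$i) * lam i (pbar$i) * g i c - lam i (pbar$i) * Gh g i c"
          using pay[OF cB, of i] int[of i] by (simp add: val_def)
        show "x0 i c pbar * wt c = AA g i c - DD g i c"
          unfolding x AA_def DD_def by (simp add: algebra_simps)
      qed
      finally show ?thesis using cB by simp
    qed
  qed
  have "((\<lambda>c. if c \<in> B then F c else 0) has_integral R) UNIV"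
    using hi has_integral_AE[OF AEeq] by simp
  then have "(F has_integral R) B" by (simp add: has_integral_restrict_UNIV)
  then show ?thesis unfolding revenue_def F_def R_def[symmetric] by (rule integral_unique)
qed

end


lemma step_has_integral:
  fixes f :: "real \<Rightarrow> real"
  assumes ab: "a \<le> b" and mb: "m \<le> b"
    and one: "\<And>z. z \<in> {a..b} \<Longrightarrow> z < m \<Longrightarrow> f z = 1"
    and zero: "\<And>z. z \<in> {a..b} \<Longrightarrow> m < z \<Longrightarrow> f z = 0"
  shows "(f has_integral max 0 (m - a)) {a..b}"
proof (cases "m \<le> a")
  case True
  have h0: "((\<lambda>_. 0::real) has_integral 0) {a..b}" by simp
  have "(f has_integral 0) {a..b}"
    by (rule has_integral_spike[OF _ _ h0, of "{m}"]) (use zero True in auto)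
  then show ?thesis using True by simp
next
  case False
  have h1: "((\<lambda>_. 1::real) has_integral (m - a)) {a..m}"
    using has_integral_const_real[of "1::real" a m] False by simp
  have I1: "(f has_integral (m - a)) {a..m}"
    by (rule has_integral_spike[OF _ _ h1, of "{m}"]) (use one mb in auto)
  have h2: "((\<lambda>_. 0::real) has_integral 0) {m..b}" by simp
  have I2: "(f has_integral 0) {m..b}"
    by (rule has_integral_spike[OF _ _ h2, of "{m}"]) (use zero False in auto)
  have "(f has_integral (m - a) + 0) {a..b}"
    by (rule has_integral_combine[OF _ mb I1 I2]) (use False in auto)
  then show ?thesis using False by simp
qed

context vwm_setting begin

lemma pay_vwm:
  assumes c: "c \<in> B"
  shows "X i c pbar = val lam i (c$i) (pbar$i) * \<pi> i c pbar
        - lam i (pbar$i) * integral {c$i..hi$i} (\<lambda>z. \<pi> i (upd c i z) pbar)"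
proof -
  let ?t = "thr i c"
  let ?s = "\<lambda>z. \<pi> i (upd c i z) pbar"
  have ci: "c$i \<in> {lo$i..hi$i}" using c B_iff by auto
  have uB: "z \<in> {lo$i..hi$i} \<Longrightarrow> upd c i z \<in> B" for z using upd_in_B[OF c] .
  have Xd: "X i c pbar = (if \<pi> i c pbar = 1 then val lam i (zs i ?t) (pbar$i) else 0)"
    unfolding vwm_pay_def zs_def thr_def ..
  have p01: "\<pi> i c pbar \<in> {0,1}" using feas[OF c] by auto
  show ?thesis
  proof (cases "SS i ?t = {}")
    case True
    have s0: "?s z = 0" if z: "z \<in> {lo$i..hi$i}" for z
    proof -
      have "V i z < ?t" using True z by (auto simp: SS_def)
      then show ?thesis using W1'[OF uB[OF z]] by simp
    qed
    have "\<pi> i c pbar = 0" using s0[OF ci] by simp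
    moreover have "integral {c$i..hi$i} ?s = 0"
    proof -
      have "integral {c$i..hi$i} ?s = integral {c$i..hi$i} (\<lambda>_. 0::real)"
        by (rule integral_cong) (use ci s0 in auto)
      then show ?thesis by simp
    qed
    ultimately show ?thesis using Xd by simp
  next
    case False
    define m where "m = zs i ?t"
    have m: "m \<in> {lo$i..hi$i}" using zs_range[OF False] m_def by simp
    have one: "?s z = 1" if "z \<in> {c$i..hi$i}" "z < m" for z
    proof -
      have z: "z \<in> {lo$i..hi$i}" using that ci by auto
      have "?t < V i z" using below_zs[OF False z] that m_def by simp
      then show ?thesis using W2[OF uB[OF z]] by simp
    qed
    have zero: "?s z = 0" if "z \<in> {c$i..hi$i}" "m < z" for z
    proof -
      have z: "z \<in> {lo$i..hi$i}" using that ci by auto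
      have "V i z < ?t" using ge_thr_le_zs[OF z, of ?t] that m_def by force
      then show ?thesis using W1'[OF uB[OF z]] by simp
    qed
    have "(?s has_integral max 0 (m - c$i)) {c$i..hi$i}"
      by (rule step_has_integral) (use ci m one zero in auto)
    then have I: "integral {c$i..hi$i} ?s = max 0 (m - c$i)" by (rule integral_unique)
    consider "c$i < m" | "c$i = m" | "m < c$i" by linarith
    then show ?thesis
    proof cases
      case 1
      have "?t < V i (c$i)" using below_zs[OF False ci] 1 m_def by simp
      then have "\<pi> i c pbar = 1" using W2[OF c] by simp
      then have "X i c pbar = (pbar$i - m) * lam i (pbar$i)" using Xd by (simp add: val_def m_def)
      moreover have "integral {c$i..hi$i} ?s = m - c$i" using I 1 by simp
      moreover have "val lam i (c$i) (pbar$i) * 1 - lam i (pbar$i) * (m - c$i) = (pbar$i - m) * lam i (pbar$i)"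
        by (simp add: val_def algebra_simps)
      ultimately show ?thesis using \<open>\<pi> i c pbar = 1\<close> by simp
    next
      case 2
      then show ?thesis using Xd I p01 by (auto simp: m_def[symmetric])
    next
      case 3
      have "V i (c$i) < ?t" using ge_thr_le_zs[OF ci, of ?t] 3 m_def by force
      then have "\<pi> i c pbar = 0" using W1'[OF c] by simp
      then show ?thesis using Xd I 3 by simp
    qed
  qed
qed


definition "Vt i x = V i (max (lo$i) (min (hi$i) x))"

lemma Vt_in: "x \<in> {lo$i..hi$i} \<Longrightarrow> Vt i x = V i x"
proof -
  assume "x \<in> {lo$i..hi$i}"
  then have "max (lo$i) (min (hi$i) x) = x" by auto
  then show ?thesis unfolding Vt_def by simp
qed

lemma Vt_antimono: "x \<le> y \<Longrightarrow> Vt i y \<le> Vt i x"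
  unfolding Vt_def using lohi[rule_format, of i]
  by (intro V_mono) (auto simp: max_def min_def)

lemma Vt_meas[measurable]: "Vt i \<in> borel_measurable borel"
proof -
  have "mono (\<lambda>x. - Vt i x)" by (auto intro!: monoI simp: Vt_antimono)
  then have "(\<lambda>x. - Vt i x) \<in> borel_measurable borel" by (rule borel_measurable_mono)
  then have "(\<lambda>x. - (- Vt i x)) \<in> borel_measurable borel" by measurable
  then show ?thesis by simp
qed

definition "gv i c = (if c \<in> B \<and> 0 < Vt i (c$i) \<and> (\<forall>j\<in>UNIV. j \<noteq> i \<longrightarrow> Vt j (c$j) < Vt i (c$i)) then 1 else (0::real))"

lemma B_sets[measurable]: "B \<in> sets borel" by simp

lemma gv_galloc: "galloc gv"
  unfolding galloc_def
proof (intro conjI allI impI)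
  fix i
  show "gv i \<in> borel_measurable borel" unfolding gv_def by measurable
qed (auto simp: gv_def)

lemma single_null:
  assumes Z: "Z \<in> sets borel" and sub: "Z \<subseteq> {z \<in> {lo$i..hi$i}. V i z = r}"
  shows "Z \<in> null_sets lborel"
proof (cases "Z = {}")
  case False
  then obtain z0 where z0: "z0 \<in> Z" by auto
  have "Z \<subseteq> {z0}"
  proof
    fix z assume "z \<in> Z"
    then have "z \<in> {z \<in> {lo$i..hi$i}. V i z = r}" "z0 \<in> {z \<in> {lo$i..hi$i}. V i z = r}"
      using z0 sub by (auto simp del: atLeastAtMost_iff)
    then have a: "z \<in> {lo$i..hi$i}" "z0 \<in> {lo$i..hi$i}" "V i z = V i z0" by (simp_all del: atLeastAtMost_iff)
    have "inj_on (\<lambda>c. virt lam C dens i c (pbar$i)) {lo$i..hi$i}" using invertible by simp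
    moreover have "V i = (\<lambda>c. virt lam C dens i c (pbar$i))" by (simp add: V_def fun_eq_iff)
    ultimately have "inj_on (V i) {lo$i..hi$i}" by simp
    then have "z = z0" using a inj_onD by metis
    then show "z \<in> {z0}" by simp
  qed
  moreover have "{z0} \<in> null_sets (lborel :: real measure)" by (rule finite_imp_null_set_lborel) simp
  moreover have "Z \<in> sets lborel" using Z by simp
  ultimately show ?thesis using null_sets_subset[of "{z0}" lborel Z] by blast
qed simp

lemma tie_null0: "{c \<in> B. Vt i (c$i) = 0} \<in> null_sets lborel"
proof (rule null_by_slices[of _ i])
  show "{c \<in> B. Vt i (c$i) = 0} \<in> sets borel" by measurable
  fix c
  show "{z. upd c i z \<in> {c \<in> B. Vt i (c$i) = 0}} \<in> null_sets lborel"
  proof (rule single_null[of _ i 0])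
    show "{z. upd c i z \<in> {c \<in> B. Vt i (c$i) = 0}} \<in> sets borel"
      by (rule slice_sets) measurable
    show "{z. upd c i z \<in> {c \<in> B. Vt i (c$i) = 0}} \<subseteq> {z \<in> {lo$i..hi$i}. V i z = 0}"
      by (auto simp: B_iff Vt_in split: if_splits)
  qed
qed

lemma tie_nullj: "j \<noteq> i \<Longrightarrow> {c \<in> B. Vt i (c$i) = Vt j (c$j)} \<in> null_sets lborel"
proof (rule null_by_slices[of _ i])
  assume ji: "j \<noteq> i"
  show "{c \<in> B. Vt i (c$i) = Vt j (c$j)} \<in> sets borel" by measurable
  fix c
  show "{z. upd c i z \<in> {c \<in> B. Vt i (c$i) = Vt j (c$j)}} \<in> null_sets lborel"
  proof (rule single_null[of _ i "Vt j (c$j)"])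
    show "{z. upd c i z \<in> {c \<in> B. Vt i (c$i) = Vt j (c$j)}} \<in> sets borel"
      by (rule slice_sets) measurable
    show "{z. upd c i z \<in> {c \<in> B. Vt i (c$i) = Vt j (c$j)}} \<subseteq> {z \<in> {lo$i..hi$i}. V i z = Vt j (c$j)}"
      using ji by (auto simp: B_iff Vt_in split: if_splits)
  qed
qed

lemma gv_AE: "AE c in lborel. c \<in> B \<longrightarrow> \<pi> i c pbar = gv i c"
proof -
  have a0: "AE c in lborel. c \<notin> {c \<in> B. Vt i (c$i) = 0}" by (rule AE_not_in[OF tie_null0])
  have aj: "AE c in lborel. \<forall>j\<in>UNIV. j \<noteq> i \<longrightarrow> c \<notin> {c \<in> B. Vt i (c$i) = Vt j (c$j)}"
  proof (rule AE_finite_allI)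
    fix j :: 'n
    show "AE c in lborel. j \<noteq> i \<longrightarrow> c \<notin> {c \<in> B. Vt i (c$i) = Vt j (c$j)}"
    proof (cases "j = i")
      case False then show ?thesis using AE_not_in[OF tie_nullj[OF False]] by simp
    qed simp
  qed simp
  show ?thesis using a0 aj
  proof eventually_elim
    case (elim c)
    show ?case
    proof
      assume c: "c \<in> B"
      have Vc: "Vt k (c$k) = V k (c$k)" for k using c B_iff Vt_in by auto
      have ne0: "V i (c$i) \<noteq> 0" using elim(1) c Vc by auto
      have nej: "j \<noteq> i \<Longrightarrow> V i (c$i) \<noteq> V j (c$j)" for j using elim(2) c Vc by auto
      have "V i (c$i) \<noteq> thr i c" using thr_in[of i c] ne0 nej by metis
      then consider "thr i c < V i (c$i)" | "V i (c$i) < thr i c" by linarith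
      then show "\<pi> i c pbar = gv i c"
      proof cases
        case 1
        have "0 < V i (c$i)" using thr_ge0[of i c] 1 by linarith
        moreover have "j \<noteq> i \<Longrightarrow> V j (c$j) < V i (c$i)" for j using thr_geV[of j i c] 1 by linarith
        ultimately have "gv i c = 1" using c by (auto simp: gv_def Vc)
        then show ?thesis using W2[OF c 1] by simp
      next
        case 2
        have "gv i c = 0"
        proof (rule ccontr)
          assume "gv i c \<noteq> 0"
          then have "0 < V i (c$i)" "\<And>j. j \<noteq> i \<Longrightarrow> V j (c$j) < V i (c$i)"
            by (auto simp: gv_def Vc split: if_splits)
          then have "thr i c \<le> V i (c$i)" by (intro thr_le) (auto simp: less_imp_le)
          then show False using 2 by simp
        qed
        then show ?thesis using W1'[OF c 2] by simp
      qed
    qed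
  qed
qed


lemma g_from_meas:
  assumes fe: "feasible_alloc \<pi>' lo hi"
    and m: "\<forall>i. (\<lambda>c. \<pi>' i c pbar) \<in> borel_measurable (lebesgue_on B)"
  shows "\<exists>g. galloc g \<and> (\<forall>i. AE c in lborel. c \<in> B \<longrightarrow> \<pi>' i c pbar = g i c)"
proof -
  have "\<forall>i. \<exists>gi. gi \<in> borel_measurable borel \<and> (\<forall>c. gi c \<in> {0,1}) \<and> (\<forall>c. c \<notin> B \<longrightarrow> gi c = 0)
      \<and> (AE c in lborel. c \<in> B \<longrightarrow> \<pi>' i c pbar = gi c)"
  proof
    fix i
    have "B \<in> sets lebesgue" by (rule sets_completionI_sets) simp
    then have Bl: "B \<inter> space lebesgue \<in> sets lebesgue" by simp
    have "(\<lambda>c. indicator B c *\<^sub>R \<pi>' i c pbar) \<in> borel_measurable lebesgue"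
      using m borel_measurable_restrict_space_iff[OF Bl, of "\<lambda>c. \<pi>' i c pbar"] by simp
    from completion_ex_borel_measurable_real[OF this]
    obtain g0 where g0: "g0 \<in> borel_measurable lborel"
      "AE c in lborel. indicator B c *\<^sub>R \<pi>' i c pbar = g0 c" by auto
    have [measurable]: "g0 \<in> borel_measurable borel" using g0(1) by simp
    define gi where "gi c = (if c \<in> B \<and> g0 c = 1 then 1 else (0::real))" for c
    have "gi \<in> borel_measurable borel" unfolding gi_def by measurable
    moreover have "\<forall>c. gi c \<in> {0,1}" "\<forall>c. c \<notin> B \<longrightarrow> gi c = 0" by (auto simp: gi_def)
    moreover have "AE c in lborel. c \<in> B \<longrightarrow> \<pi>' i c pbar = gi c"
      using g0(2)
    proof eventually_elim
      case (elim c)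
      show ?case
      proof
        assume c: "c \<in> B"
        then have "\<pi>' i c pbar \<in> {0,1}" using fe unfolding feasible_alloc_def by auto
        then show "\<pi>' i c pbar = gi c" using elim c by (auto simp: gi_def)
      qed
    qed
    ultimately show "\<exists>gi. gi \<in> borel_measurable borel \<and> (\<forall>c. gi c \<in> {0,1}) \<and> (\<forall>c. c \<notin> B \<longrightarrow> gi c = 0)
      \<and> (AE c in lborel. c \<in> B \<longrightarrow> \<pi>' i c pbar = gi c)" by blast
  qed
  from choice[OF this] obtain G where G: "\<forall>i. G i \<in> borel_measurable borel \<and> (\<forall>c. G i c \<in> {0,1}) \<and> (\<forall>c. c \<notin> B \<longrightarrow> G i c = 0)
      \<and> (AE c in lborel. c \<in> B \<longrightarrow> \<pi>' i c pbar = G i c)" by blast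
  have "galloc G" unfolding galloc_def using G by simp
  moreover have "\<forall>i. AE c in lborel. c \<in> B \<longrightarrow> \<pi>' i c pbar = G i c" using G by simp
  ultimately show ?thesis by blast
qed

lemma AE_virt:
  assumes g: "galloc g" and ae: "\<And>i. AE c in lborel. c \<in> B \<longrightarrow> \<pi>0 i c pbar = g i c"
  shows "AE c in lborel. (\<Sum>i\<in>UNIV. AA g i c - EE g i c)
     = (if c \<in> B then wt c * (\<Sum>i\<in>UNIV. V i (c$i) * \<pi>0 i c pbar) else 0)"
proof -
  have AE1: "AE c in lborel. \<forall>j\<in>UNIV. c$j \<in> {lo$j..hi$j} \<longrightarrow> dens j (c$j) = dd j (c$j)"
  proof (rule AE_finite_allI)
    fix j :: 'n
    show "AE c in lborel. c$j \<in> {lo$j..hi$j} \<longrightarrow> dens j (c$j) = dd j (c$j)"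
      by (rule AE_coord[OF dd_AE])
  qed simp
  have AE2: "AE c in lborel. \<forall>i\<in>UNIV. c \<in> B \<longrightarrow> \<pi>0 i c pbar = g i c"
    by (rule AE_finite_allI) (auto intro: ae)
  show ?thesis using AE1 AE2
  proof eventually_elim
    case (elim c)
    show ?case
    proof (cases "c \<in> B")
      case False then show ?thesis by (simp add: AA_def EE_def wt_out galloc_out[OF g])
    next
      case cB: True
      have each: "AA g i c - EE g i c = wt c * (V i (c$i) * \<pi>0 i c pbar)" for i
      proof -
        have ci: "c$i \<in> {lo$i..hi$i}" using cB B_iff by auto
        have dpos: "0 < dens i (c$i)" using dens_pos ci by auto
        have wt: "wt c = dens i (c$i) * wm i c" using wt_split[of c i] elim(1) ci by simp
        have pg: "\<pi>0 i c pbar = g i c" using elim(2) cB by simp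
        have Cc: "Cc i (c$i) = C i (c$i)" using ci by (simp add: Cc_def)
        show ?thesis
          unfolding AA_def EE_def V_def virt_def val_def pg Cc wt using dpos
          by (simp add: field_simps)
      qed
      have "(\<Sum>i\<in>UNIV. AA g i c - EE g i c) = (\<Sum>i\<in>UNIV. wt c * (V i (c$i) * \<pi>0 i c pbar))"
        by (simp add: each)
      also have "\<dots> = wt c * (\<Sum>i\<in>UNIV. V i (c$i) * \<pi>0 i c pbar)"
        by (simp add: sum_distrib_left)
      finally show ?thesis using cB by simp
    qed
  qed
qed

lemma rev_le:
  assumes fe: "feasible_alloc \<pi>' lo hi"
    and pr: "payment_rule lam lo hi \<pi>' x'"
    and m: "\<forall>i. (\<lambda>c. \<pi>' i c pbar) \<in> borel_measurable (lebesgue_on B)"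
  shows "revenue dens lo hi x' pbar \<le> revenue dens lo hi X pbar"
proof -
  obtain g' where g': "galloc g'" and ae': "\<And>i. AE c in lborel. c \<in> B \<longrightarrow> \<pi>' i c pbar = g' i c"
    using g_from_meas[OF fe m] by blast
  have r1: "revenue dens lo hi x' pbar = (\<integral>c. (\<Sum>i\<in>UNIV. AA g' i c - EE g' i c) \<partial>lborel)"
    by (rule revenue_eq[of g' "\<pi>'" x', OF g' ae']) (use pr in \<open>auto simp: payment_rule_def\<close>)
  have r2: "revenue dens lo hi X pbar = (\<integral>c. (\<Sum>i\<in>UNIV. AA gv i c - EE gv i c) \<partial>lborel)"
    by (rule revenue_eq[of gv \<pi> X, OF gv_galloc gv_AE pay_vwm])
  have i1: "integrable lborel (\<lambda>c. \<Sum>i\<in>UNIV. AA g' i c - EE g' i c)"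
    using AA_integrable[OF g'] EE_integrable[OF g'] by auto
  have i2: "integrable lborel (\<lambda>c. \<Sum>i\<in>UNIV. AA gv i c - EE gv i c)"
    using AA_integrable[OF gv_galloc] EE_integrable[OF gv_galloc] by auto
  have "AE c in lborel. (\<Sum>i\<in>UNIV. AA g' i c - EE g' i c) \<le> (\<Sum>i\<in>UNIV. AA gv i c - EE gv i c)"
    using AE_virt[of g' "\<pi>'", OF g' ae'] AE_virt[of gv \<pi>, OF gv_galloc gv_AE]
  proof eventually_elim
    case (elim c)
    show ?case
    proof (cases "c \<in> B")
      case False then show ?thesis using elim by simp
    next
      case cB: True
      have "(\<forall>i. \<pi>' i c pbar \<in> {0,1}) \<and> card {i. \<pi>' i c pbar = 1} \<le> 1"
        using fe cB unfolding feasible_alloc_def by auto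
      then have "(\<Sum>i\<in>UNIV. V i (c$i) * \<pi>' i c pbar) \<le> (\<Sum>i\<in>UNIV. V i (c$i) * \<pi> i c pbar)"
        using opt[OF cB, of "\<lambda>i. \<pi>' i c pbar" pbar] by auto
      then have "wt c * (\<Sum>i\<in>UNIV. V i (c$i) * \<pi>' i c pbar) \<le> wt c * (\<Sum>i\<in>UNIV. V i (c$i) * \<pi> i c pbar)"
        by (rule mult_left_mono) (simp add: wt_nonneg)
      then show ?thesis using elim cB by simp
    qed
  qed
  then have "(\<integral>c. (\<Sum>i\<in>UNIV. AA g' i c - EE g' i c) \<partial>lborel) \<le> (\<integral>c. (\<Sum>i\<in>UNIV. AA gv i c - EE gv i c) \<partial>lborel)"
    by (rule integral_mono_AE[OF i1 i2])
  then show ?thesis using r1 r2 by simp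
qed

end

theorem theorem5:
  fixes lo hi pbar :: "real^'n::finite"
    and C dens lam :: "'n \<Rightarrow> real \<Rightarrow> real"
    and \<pi> :: "'n \<Rightarrow> real^'n \<Rightarrow> real^'n \<Rightarrow> real"
  assumes lohi: "\<forall>i. lo$i < hi$i"
    and cdf_lo: "\<forall>i. C i (lo$i) = 0"
    and cdf_hi: "\<forall>i. C i (hi$i) = 1"
    and density: "\<forall>i. \<forall>c\<in>{lo$i..hi$i}.
                    (C i has_real_derivative dens i c) (at c within {lo$i..hi$i})"
    and dens_pos: "\<forall>i. \<forall>c\<in>{lo$i..hi$i}. 0 < dens i c"
    and lam: "\<forall>i p. 0 < lam i p \<and> lam i p \<le> 1"
    and reg: "\<forall>i. regular lam C dens lo hi i"
    and pbar: "\<forall>i p'. lam i p' \<le> lam i (pbar$i)"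
    and invertible: "\<forall>i. inj_on (\<lambda>c. virt lam C dens i c (pbar$i)) {lo$i..hi$i}"
    and alloc: "is_vwm_alloc lam C dens lo hi pbar \<pi>"
  shows "IC lam lo hi \<pi> (vwm_pay lam C dens lo hi pbar \<pi>)
       \<and> IR lam lo hi \<pi> (vwm_pay lam C dens lo hi pbar \<pi>)
       \<and> dominant_prices lam lo hi \<pi> (vwm_pay lam C dens lo hi pbar \<pi>) pbar
       \<and> (\<forall>\<pi>' x'. feasible_alloc \<pi>' lo hi \<and> IC lam lo hi \<pi>' x' \<and> IR lam lo hi \<pi>' x'
              \<and> price_independent \<pi>' \<and> payment_rule lam lo hi \<pi>' x'
              \<and> (\<forall>i. (\<lambda>c. \<pi>' i c pbar) \<in> borel_measurable (lebesgue_on (cbox lo hi)))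
            \<longrightarrow> dominant_prices lam lo hi \<pi>' x' pbar
              \<and> revenue dens lo hi x' pbar
                  \<le> revenue dens lo hi (vwm_pay lam C dens lo hi pbar \<pi>) pbar)"
proof -
  interpret vwm_setting lo hi pbar C dens lam \<pi>
    by unfold_locales (fact assms)+
  show ?thesis
    using IC_vwm IR_vwm dom_vwm dom_other rev_le by blast
qed


end
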